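(* Let $R=\bigoplus_{\alpha\in\Gamma}R_{\alpha}$ be a graded integral domain and let $\star$ be a semistar operation on $R$ such that $R^{\star}\subsetneq R_H$. Then for each nonzero finitely generated homogeneous ideal $I$ of $R$, $I$ is $\star_f$-invertible if and only if $I\,\mathrm{NA}(R,\star)$ is invertible.
   Context: $\Gamma$ is a commutative cancellative monoid (written additively) whose quotient group $\langle\Gamma\rangle$ is torsion-free. A graded integral domain $R=\bigoplus_{\alpha\in\Gamma}R_\alpha$ is an integral domain that is the direct sum of additive subgroups $R_\alpha$ with $R_\alpha R_\beta\subseteq R_{\alpha+\beta}$. $K$ is its quotient field, $H$ the set of nonzero homogeneous elements of $R$, $R_H$ the homogeneous quotient field. An ideal $I$ is homogeneous if $I=\bigoplus_\alpha(I\cap R_\alpha)$. For $a\in R$, $C(a)$ is the ideal generated by the homogeneous components of $a$; for $f=f_0+\cdots+f_nX^n\in R[X]$, $A_f:=\sum_i C(f_i)$. A semistar operation on $R$ is a map $\star$ from the set of nonzero $R$-submodules of $K$ to itself such that for all $0\ne x\in K$ and $E,F$: $(xE)^\star=xE^\star$; $E\subseteq F\Rightarrow E^\star\subseteq F^\star$; $E\subseteq E^\star$; $(E^\star)^\star=E^\star$. $\star_f$ is defined by $E^{\star_f}=\bigcup\{F^\star: F\subseteq E, F$ a nonzero finitely generated fractional ideal$\}$. A nonzero fractional ideal $I$ is $\star_f$-invertible if $(I(R:I))^{\star_f}=R^\star$, where $(R:I)=\{x\in K: xI\subseteq R\}$. $N(\star):=\{f\in R[X]: f\ne0,\ A_f^\star=R^\star\}$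 and $\mathrm{NA}(R,\star):=R[X]_{N(\star)}$. *)

theory Defs
  imports "HOL-Computational_Algebra.Polynomial" "HOL-Computational_Algebra.Fraction_Field"
begin

definition lin_comb :: "'a::comm_ring_1 set \<Rightarrow> 'a set \<Rightarrow> 'a set" where
  "lin_comb A S = {x. \<exists>T c. finite T \<and> T \<subseteq> S \<and> (\<forall>t\<in>T. c t \<in> A) \<and> x = (\<Sum>t\<in>T. c t * t)}"

definition is_subring :: "'a::comm_ring_1 set \<Rightarrow> bool" where
  "is_subring A \<longleftrightarrow> 1 \<in> A \<and> 0 \<in> A \<and> (\<forall>x\<in>A. \<forall>y\<in>A. x + y \<in> A \<and> x * y \<in> A \<and> - x \<in> A)"

text \<open>A-submodule of the ambient ring (the ambient field plays the role of K).\<close>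
definition is_submod :: "'a::comm_ring_1 set \<Rightarrow> 'a set \<Rightarrow> bool" where
  "is_submod A E \<longleftrightarrow> 0 \<in> E \<and> (\<forall>x\<in>E. \<forall>y\<in>E. x + y \<in> E) \<and> (\<forall>r\<in>A. \<forall>x\<in>E. r * x \<in> E)"

definition nz_submod :: "'a::comm_ring_1 set \<Rightarrow> 'a set \<Rightarrow> bool" where
  "nz_submod A E \<longleftrightarrow> is_submod A E \<and> E \<noteq> {0}"

definition is_ideal :: "'a::comm_ring_1 set \<Rightarrow> 'a set \<Rightarrow> bool" where
  "is_ideal A I \<longleftrightarrow> is_submod A I \<and> I \<subseteq> A"

definition nz_frac_ideal :: "'a::comm_ring_1 set \<Rightarrow> 'a set \<Rightarrow> bool" where
  "nz_frac_ideal A E \<longleftrightarrow> nz_submod A E \<and> (\<exists>d\<in>A. d \<noteq> 0 \<and> (\<forall>x\<in>E. d * x \<in> A))"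

definition fin_gen :: "'a::comm_ring_1 set \<Rightarrow> 'a set \<Rightarrow> bool" where
  "fin_gen A E \<longleftrightarrow> (\<exists>S. finite S \<and> E = lin_comb A S)"

definition submod_mult :: "'a::comm_ring_1 set \<Rightarrow> 'a set \<Rightarrow> 'a set \<Rightarrow> 'a set" where
  "submod_mult A E F = lin_comb A {x * y | x y. x \<in> E \<and> y \<in> F}"

definition colon :: "'a::comm_ring_1 set \<Rightarrow> 'a set \<Rightarrow> 'a set" where
  "colon A E = {x. \<forall>y\<in>E. x * y \<in> A}"

definition invertible_ideal :: "'a::comm_ring_1 set \<Rightarrow> 'a set \<Rightarrow> bool" where
  "invertible_ideal A J \<longleftrightarrow> nz_frac_ideal A J \<and> submod_mult A J (colon A J) = A"

text \<open>Torsion-freeness of the quotient group of a cancellative commutative monoid: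
  n(a - b) = 0 with n \<ge> 1 forces a = b, i.e. n a = n b implies a = b.\<close>
definition torsion_free_quot :: "'g::cancel_comm_monoid_add itself \<Rightarrow> bool" where
  "torsion_free_quot _ \<longleftrightarrow>
     (\<forall>n::nat. \<forall>a b::'g. n > 0 \<longrightarrow> (\<Sum>i<n. a) = (\<Sum>i<n. b) \<longrightarrow> a = b)"

definition fin_supp :: "('g \<Rightarrow> 'k::zero) \<Rightarrow> bool" where
  "fin_supp f \<longleftrightarrow> finite {\<alpha>. f \<alpha> \<noteq> 0}"

definition hom_decomp :: "('g \<Rightarrow> 'k::field set) \<Rightarrow> ('g \<Rightarrow> 'k) \<Rightarrow> 'k \<Rightarrow> bool" where
  "hom_decomp Rg f x \<longleftrightarrow> fin_supp f \<and> (\<forall>\<alpha>. f \<alpha> \<in> Rg \<alpha>) \<and> x = (\<Sum>\<alpha>\<in>{\<alpha>. f \<alpha> \<noteq> 0}. f \<alpha>)"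

text \<open>R (a subring of the field 'k, which is its quotient field) is a graded integral domain
  R = \<Oplus> R_\<alpha> with R_\<alpha> = Rg \<alpha>.\<close>
definition graded_domain :: "'k::field set \<Rightarrow> ('g::cancel_comm_monoid_add \<Rightarrow> 'k set) \<Rightarrow> bool" where
  "graded_domain R Rg \<longleftrightarrow>
     torsion_free_quot TYPE('g) \<and>
     is_subring R \<and>
     (\<forall>x. \<exists>a\<in>R. \<exists>b\<in>R. b \<noteq> 0 \<and> x = a / b) \<and>
     (\<forall>\<alpha>. Rg \<alpha> \<subseteq> R \<and> 0 \<in> Rg \<alpha> \<and> (\<forall>x\<in>Rg \<alpha>. \<forall>y\<in>Rg \<alpha>. x + y \<in> Rg \<alpha> \<and> - x \<in> Rg \<alpha>)) \<and>
     (\<forall>\<alpha> \<beta>. \<forall>x\<in>Rg \<alpha>. \<forall>y\<in>Rg \<beta>. x * y \<in> Rg (\<alpha> + \<beta>)) \<and>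
     (\<forall>x\<in>R. \<exists>f. hom_decomp Rg f x) \<and>
     (\<forall>f g x. hom_decomp Rg f x \<longrightarrow> hom_decomp Rg g x \<longrightarrow> f = g)"

definition hom_elems :: "('g \<Rightarrow> 'k::field set) \<Rightarrow> 'k set" where
  "hom_elems Rg = (\<Union>\<alpha>. Rg \<alpha>) - {0}"

definition hom_quot_field :: "'k::field set \<Rightarrow> ('g \<Rightarrow> 'k set) \<Rightarrow> 'k set" where
  "hom_quot_field R Rg = {a / h | a h. a \<in> R \<and> h \<in> hom_elems Rg}"

definition hom_ideal :: "'k::field set \<Rightarrow> ('g \<Rightarrow> 'k set) \<Rightarrow> 'k set \<Rightarrow> bool" where
  "hom_ideal R Rg I \<longleftrightarrow> is_ideal R I \<and>
     (\<forall>x\<in>I. \<exists>f. hom_decomp (\<lambda>\<alpha>. I \<inter> Rg \<alpha>) f x)"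

definition hom_comps :: "('g \<Rightarrow> 'k::field set) \<Rightarrow> 'k \<Rightarrow> 'k set" where
  "hom_comps Rg x = {y. \<exists>f \<alpha>. hom_decomp Rg f x \<and> y = f \<alpha>}"

definition content_C :: "'k::field set \<Rightarrow> ('g \<Rightarrow> 'k set) \<Rightarrow> 'k \<Rightarrow> 'k set" where
  "content_C R Rg x = lin_comb R (hom_comps Rg x)"

definition content_A :: "'k::field set \<Rightarrow> ('g \<Rightarrow> 'k set) \<Rightarrow> 'k poly \<Rightarrow> 'k set" where
  "content_A R Rg p = lin_comb R (\<Union>i\<le>degree p. content_C R Rg (coeff p i))"

definition scal :: "'k::field \<Rightarrow> 'k set \<Rightarrow> 'k set" where
  "scal x E = (\<lambda>e. x * e) ` E"

definition semistar :: "'k::field set \<Rightarrow> ('k set \<Rightarrow> 'k set) \<Rightarrow> bool" where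
  "semistar R st \<longleftrightarrow>
     (\<forall>E. nz_submod R E \<longrightarrow> nz_submod R (st E)) \<and>
     (\<forall>x E. x \<noteq> 0 \<longrightarrow> nz_submod R E \<longrightarrow> st (scal x E) = scal x (st E)) \<and>
     (\<forall>E F. nz_submod R E \<longrightarrow> nz_submod R F \<longrightarrow> E \<subseteq> F \<longrightarrow> st E \<subseteq> st F) \<and>
     (\<forall>E. nz_submod R E \<longrightarrow> E \<subseteq> st E) \<and>
     (\<forall>E. nz_submod R E \<longrightarrow> st (st E) = st E)"

definition star_f :: "'k::field set \<Rightarrow> ('k set \<Rightarrow> 'k set) \<Rightarrow> 'k set \<Rightarrow> 'k set" where
  "star_f R st E = \<Union>{st F | F. F \<subseteq> E \<and> nz_frac_ideal R F \<and> fin_gen R F}"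

definition star_f_invertible :: "'k::field set \<Rightarrow> ('k set \<Rightarrow> 'k set) \<Rightarrow> 'k set \<Rightarrow> bool" where
  "star_f_invertible R st I \<longleftrightarrow>
     nz_frac_ideal R I \<and> star_f R st (submod_mult R I (colon R I)) = st R"

definition poly_over :: "'k::field set \<Rightarrow> 'k poly set" where
  "poly_over R = {p. \<forall>i. coeff p i \<in> R}"

definition N_star :: "'k::field set \<Rightarrow> ('g \<Rightarrow> 'k set) \<Rightarrow> ('k set \<Rightarrow> 'k set) \<Rightarrow> 'k poly set" where
  "N_star R Rg st = {f \<in> poly_over R. f \<noteq> 0 \<and> st (content_A R Rg f) = st R}"

text \<open>NA(R,star) = R[X]_{N(star)}, as a subring of K(X) = 'k poly fract.\<close>
definition NA :: "'k::field set \<Rightarrow> ('g \<Rightarrow> 'k set) \<Rightarrow> ('k set \<Rightarrow> 'k set) \<Rightarrow> 'k poly fract set" where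
  "NA R Rg st = {Fract f g | f g. f \<in> poly_over R \<and> g \<in> N_star R Rg st}"

definition ext_NA :: "'k::field set \<Rightarrow> ('g \<Rightarrow> 'k set) \<Rightarrow> ('k set \<Rightarrow> 'k set) \<Rightarrow> 'k set \<Rightarrow> 'k poly fract set" where
  "ext_NA R Rg st I = lin_comb (NA R Rg st) ((\<lambda>a. Fract [:a:] 1) ` I)"

end

theory Submission
  imports Defs
begin

definition nsm :: "nat \<Rightarrow> 'g::cancel_comm_monoid_add \<Rightarrow> 'g" where
  "nsm n a = (\<Sum>i<n. a)"

lemma nsm_0[simp]: "nsm 0 a = 0" by (simp add: nsm_def)
lemma nsm_Suc: "nsm (Suc n) a = nsm n a + a" by (simp add: nsm_def)
lemma nsm_1[simp]: "nsm 1 a = a" by (simp add: nsm_def)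
lemma nsm_Suc0[simp]: "nsm (Suc 0) a = a" by (simp add: nsm_def)
lemma nsm_add: "nsm (n + m) a = nsm n a + nsm m a"
  by (induction m) (auto simp: nsm_Suc add.assoc)
lemma nsm_distrib: "nsm n (a + b) = nsm n a + nsm n b"
  by (simp add: nsm_def sum.distrib)
lemma nsm_mult: "nsm n (nsm m a) = nsm (n * m) a"
  by (induction n) (auto simp: nsm_Suc nsm_add add.commute)
lemma nsm_zero[simp]: "nsm n 0 = 0" by (simp add: nsm_def)

definition good_ord :: "('g::cancel_comm_monoid_add \<times> 'g) set \<Rightarrow> bool" where
  "good_ord r \<longleftrightarrow> (\<forall>x. (x,x)\<in>r) \<and> (\<forall>x y z. (x,y)\<in>r \<longrightarrow> (y,z)\<in>r \<longrightarrow> (x,z)\<in>r)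
     \<and> (\<forall>x y. (x,y)\<in>r \<longrightarrow> (y,x)\<in>r \<longrightarrow> x = y)
     \<and> (\<forall>x y c. (x,y)\<in>r \<longrightarrow> (x+c,y+c)\<in>r)
     \<and> (\<forall>x y c. (x+c,y+c)\<in>r \<longrightarrow> (x,y)\<in>r)
     \<and> (\<forall>n x y. n > 0 \<longrightarrow> (nsm n x, nsm n y)\<in>r \<longrightarrow> (x,y)\<in>r)"

lemma good_ordD:
  assumes "good_ord r"
  shows good_refl: "(x,x)\<in>r" and good_trans: "(x,y)\<in>r \<Longrightarrow> (y,z)\<in>r \<Longrightarrow> (x,z)\<in>r"
    and good_anti: "(x,y)\<in>r \<Longrightarrow> (y,x)\<in>r \<Longrightarrow> x = y"
    and good_compat: "(x,y)\<in>r \<Longrightarrow> (x+c,y+c)\<in>r"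
    and good_canc: "(x+c,y+c)\<in>r \<Longrightarrow> (x,y)\<in>r"
    and good_iso: "n > 0 \<Longrightarrow> (nsm n x, nsm n y)\<in>r \<Longrightarrow> (x,y)\<in>r"
  using assms unfolding good_ord_def by blast+

lemma good_ordI:
  assumes "\<And>x. (x,x)\<in>r" "\<And>x y z. (x,y)\<in>r \<Longrightarrow> (y,z)\<in>r \<Longrightarrow> (x,z)\<in>r"
    "\<And>x y. (x,y)\<in>r \<Longrightarrow> (y,x)\<in>r \<Longrightarrow> x = y"
    "\<And>x y c. (x,y)\<in>r \<Longrightarrow> (x+c,y+c)\<in>r"
    "\<And>x y c. (x+c,y+c)\<in>r \<Longrightarrow> (x,y)\<in>r"
    "\<And>n x y. n > 0 \<Longrightarrow> (nsm n x, nsm n y)\<in>r \<Longrightarrow> (x,y)\<in>r"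
  shows "good_ord r"
  unfolding good_ord_def using assms by blast

lemma good_addboth:
  assumes g: "good_ord r" and "(x,y)\<in>r" "(u,v)\<in>r" shows "(x+u, y+v)\<in>r"
proof -
  have "(x+u, y+u)\<in>r" using good_compat[OF g assms(2)] .
  moreover have "(u+y, v+y)\<in>r" using good_compat[OF g assms(3)] .
  ultimately show ?thesis using good_trans[OF g] by (metis add.commute)
qed

lemma good_nsm:
  assumes g: "good_ord r" and "(x,y)\<in>r" shows "(nsm n x, nsm n y)\<in>r"
proof (induction n)
  case 0 then show ?case using good_refl[OF g] by simp
next
  case (Suc n) then show ?case using good_addboth[OF g _ assms(2)] by (simp add: nsm_Suc)
qed

definition ext_ord :: "('g::cancel_comm_monoid_add \<times> 'g) set \<Rightarrow> 'g \<Rightarrow> 'g \<Rightarrow> ('g \<times> 'g) set" where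
  "ext_ord r a b = {(x,y). \<exists>n k. n > 0 \<and> (nsm n x + nsm k b, nsm n y + nsm k a) \<in> r}"

lemma good_cancel:
  assumes g: "good_ord r" and "(x + c, y + c) \<in> r" shows "(x,y)\<in>r"
  using good_canc[OF assms] .

lemma ext_ordI: "n > 0 \<Longrightarrow> (nsm n x + nsm k b, nsm n y + nsm k a) \<in> r \<Longrightarrow> (x,y) \<in> ext_ord r a b"
  unfolding ext_ord_def by blast

lemma ext_ord_good:
  assumes g: "good_ord r" and ba: "(b,a) \<notin> r"
  shows "good_ord (ext_ord r a b)" "r \<subseteq> ext_ord r a b" "(a,b) \<in> ext_ord r a b"
proof -
  note refl = good_refl[OF g] and trans = good_trans[OF g] and anti = good_anti[OF g] and iso = good_iso[OF g]
  show "r \<subseteq> ext_ord r a b"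
  proof
    fix p assume p: "p \<in> r"
    obtain u v where uv: "p = (u,v)" by (cases p)
    have "(nsm 1 u + nsm 0 b, nsm 1 v + nsm 0 a) \<in> r" using p uv by simp
    then show "p \<in> ext_ord r a b" unfolding uv by (rule ext_ordI[rotated]) simp
  qed
  show "(a,b) \<in> ext_ord r a b"
  proof -
    have "(nsm 1 a + nsm 1 b, nsm 1 b + nsm 1 a) \<in> r" using refl[of "a+b"] by (simp add: add.commute)
    then show ?thesis by (rule ext_ordI[rotated]) simp
  qed
  show "good_ord (ext_ord r a b)"
  proof (rule good_ordI)
    fix x have "(nsm 1 x + nsm 0 b, nsm 1 x + nsm 0 a) \<in> r" using refl by simp
    then show "(x,x) \<in> ext_ord r a b" by (rule ext_ordI[rotated]) simp
  next
    fix x y z assume "(x,y) \<in> ext_ord r a b" "(y,z) \<in> ext_ord r a b"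
    then obtain n k m l where nk: "n>0" "(nsm n x + nsm k b, nsm n y + nsm k a) \<in> r"
      and ml: "m>0" "(nsm m y + nsm l b, nsm m z + nsm l a) \<in> r"
      unfolding ext_ord_def by auto
    have 1: "(nsm (m*n) x + nsm (m*k) b, nsm (m*n) y + nsm (m*k) a) \<in> r"
      using good_nsm[OF g nk(2), of m] by (simp add: nsm_distrib nsm_mult)
    have 2: "(nsm (n*m) y + nsm (n*l) b, nsm (n*m) z + nsm (n*l) a) \<in> r"
      using good_nsm[OF g ml(2), of n] by (simp add: nsm_distrib nsm_mult)
    have "((nsm (m*n) x + nsm (m*k) b) + (nsm (n*m) y + nsm (n*l) b),
           (nsm (m*n) y + nsm (m*k) a) + (nsm (n*m) z + nsm (n*l) a)) \<in> r"
      by (rule good_addboth[OF g 1 2])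
    then have "((nsm (m*n) x + nsm (m*k+n*l) b) + nsm (m*n) y,
           (nsm (m*n) z + nsm (m*k+n*l) a) + nsm (m*n) y) \<in> r"
      by (simp add: nsm_add ac_simps)
    then have "(nsm (m*n) x + nsm (m*k+n*l) b, nsm (m*n) z + nsm (m*k+n*l) a) \<in> r"
      by (rule good_cancel[OF g])
    then show "(x,z) \<in> ext_ord r a b" by (rule ext_ordI[rotated]) (use nk(1) ml(1) in simp)
  next
    fix x y assume "(x,y) \<in> ext_ord r a b" "(y,x) \<in> ext_ord r a b"
    then obtain n k m l where nk: "n>0" "(nsm n x + nsm k b, nsm n y + nsm k a) \<in> r"
      and ml: "m>0" "(nsm m y + nsm l b, nsm m x + nsm l a) \<in> r"
      unfolding ext_ord_def by auto
    have 1: "(nsm (m*n) x + nsm (m*k) b, nsm (m*n) y + nsm (m*k) a) \<in> r"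
      using good_nsm[OF g nk(2), of m] by (simp add: nsm_distrib nsm_mult)
    have 2: "(nsm (n*m) y + nsm (n*l) b, nsm (n*m) x + nsm (n*l) a) \<in> r"
      using good_nsm[OF g ml(2), of n] by (simp add: nsm_distrib nsm_mult)
    have "((nsm (m*n) x + nsm (m*k) b) + (nsm (n*m) y + nsm (n*l) b),
           (nsm (m*n) y + nsm (m*k) a) + (nsm (n*m) x + nsm (n*l) a)) \<in> r"
      by (rule good_addboth[OF g 1 2])
    then have "(nsm (m*k+n*l) b + (nsm (m*n) x + nsm (m*n) y),
           nsm (m*k+n*l) a + (nsm (m*n) x + nsm (m*n) y)) \<in> r"
      by (simp add: nsm_add ac_simps)
    then have c: "(nsm (m*k+n*l) b, nsm (m*k+n*l) a) \<in> r"
      by (rule good_cancel[OF g])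
    have "m*k+n*l = 0"
    proof (rule ccontr)
      assume "m*k+n*l \<noteq> 0" then have "(b,a)\<in>r" using iso[OF _ c] by simp
      then show False using ba by simp
    qed
    then have k0: "k = 0" and l0: "l = 0" using nk(1) ml(1) by simp_all
    have "(nsm n x, nsm n y) \<in> r" using nk(2) k0 by simp
    then have xy: "(x,y)\<in>r" by (rule iso[OF nk(1)])
    have "(nsm m y, nsm m x) \<in> r" using ml(2) l0 by simp
    then have yx: "(y,x)\<in>r" by (rule iso[OF ml(1)])
    show "x = y" by (rule anti[OF xy yx])
  next
    fix x y c assume "(x,y) \<in> ext_ord r a b"
    then obtain n k where nk: "n>0" "(nsm n x + nsm k b, nsm n y + nsm k a) \<in> r"
      unfolding ext_ord_def by auto
    have "((nsm n x + nsm k b) + nsm n c, (nsm n y + nsm k a) + nsm n c) \<in> r"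
      using good_compat[OF g nk(2)] .
    then have "(nsm n (x+c) + nsm k b, nsm n (y+c) + nsm k a) \<in> r"
      by (simp add: nsm_distrib ac_simps)
    then show "(x+c,y+c) \<in> ext_ord r a b" by (rule ext_ordI[rotated]) (use nk(1) in simp)
  next
    fix x y c assume "(x+c,y+c) \<in> ext_ord r a b"
    then obtain n k where nk: "n>0" "(nsm n (x+c) + nsm k b, nsm n (y+c) + nsm k a) \<in> r"
      unfolding ext_ord_def by auto
    then have "((nsm n x + nsm k b) + nsm n c, (nsm n y + nsm k a) + nsm n c) \<in> r"
      by (simp add: nsm_distrib ac_simps)
    then have "(nsm n x + nsm k b, nsm n y + nsm k a) \<in> r" by (rule good_cancel[OF g])
    then show "(x,y) \<in> ext_ord r a b" by (rule ext_ordI[rotated]) (use nk(1) in simp)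
  next
    fix p x y assume p: "0 < p" and "(nsm p x, nsm p y) \<in> ext_ord r a b"
    then obtain n k where nk: "n>0" "(nsm n (nsm p x) + nsm k b, nsm n (nsm p y) + nsm k a) \<in> r"
      unfolding ext_ord_def by auto
    then have "(nsm (n*p) x + nsm k b, nsm (n*p) y + nsm k a) \<in> r" by (simp add: nsm_mult)
    then show "(x,y) \<in> ext_ord r a b" by (rule ext_ordI[rotated]) (use nk(1) p in simp)
  qed
qed

lemma good_Id:
  assumes tf: "\<forall>n::nat. \<forall>a b::'g::cancel_comm_monoid_add. n > 0 \<longrightarrow> (\<Sum>i<n. a) = (\<Sum>i<n. b) \<longrightarrow> a = b"
  shows "good_ord (Id :: ('g \<times> 'g) set)"
proof (rule good_ordI)
  fix n x y assume "0 < (n::nat)" "(nsm n x, nsm n (y::'g)) \<in> Id"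
  then show "(x,y) \<in> Id" using tf unfolding nsm_def by auto
qed auto

lemma exists_total_order:
  assumes tf: "\<forall>n::nat. \<forall>a b::'g::cancel_comm_monoid_add. n > 0 \<longrightarrow> (\<Sum>i<n. a) = (\<Sum>i<n. b) \<longrightarrow> a = b"
  shows "\<exists>r::('g \<times> 'g) set. good_ord r \<and> (\<forall>x y. (x,y)\<in>r \<or> (y,x)\<in>r)"
proof -
  let ?A = "{r::('g\<times>'g) set. good_ord r}"
  have "\<forall>C\<in>chains ?A. \<exists>U\<in>?A. \<forall>X\<in>C. X \<subseteq> U"
  proof
    fix C assume C: "C \<in> chains ?A"
    show "\<exists>U\<in>?A. \<forall>X\<in>C. X \<subseteq> U"
    proof (cases "C = {}")
      case True then show ?thesis using good_Id[OF tf] by auto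
    next
      case False
      have gC: "\<And>X. X \<in> C \<Longrightarrow> good_ord X" using C unfolding chains_def by auto
      have ch: "\<And>X Y. X \<in> C \<Longrightarrow> Y \<in> C \<Longrightarrow> X \<subseteq> Y \<or> Y \<subseteq> X"
        using C unfolding chains_def chain_subset_def by auto
      have two: "\<exists>X\<in>C. p \<in> X \<and> q \<in> X" if pq: "p \<in> \<Union>C" "q \<in> \<Union>C" for p q
      proof -
        obtain X Y where "X \<in> C" "p \<in> X" "Y \<in> C" "q \<in> Y" using pq by blast
        then show ?thesis using ch[of X Y] by blast
      qed
      obtain X0 where X0: "X0 \<in> C" using False by auto
      have "good_ord (\<Union>C)"
      proof (rule good_ordI)
        fix x show "(x,x) \<in> \<Union>C" using good_refl[OF gC[OF X0]] X0 by blast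
      next
        fix x y z assume "(x,y) \<in> \<Union>C" "(y,z) \<in> \<Union>C"
        then obtain X where "X\<in>C" "(x,y)\<in>X" "(y,z)\<in>X" using two by blast
        then show "(x,z) \<in> \<Union>C" using good_trans[OF gC] by blast
      next
        fix x y assume "(x,y) \<in> \<Union>C" "(y,x) \<in> \<Union>C"
        then obtain X where "X\<in>C" "(x,y)\<in>X" "(y,x)\<in>X" using two by blast
        then show "x = y" using good_anti[OF gC] by blast
      next
        fix x y c assume "(x,y) \<in> \<Union>C"
        then obtain X where "X\<in>C" "(x,y)\<in>X" by blast
        then show "(x+c,y+c) \<in> \<Union>C" using good_compat[OF gC] by blast
      next
        fix x y c assume "(x+c,y+c) \<in> \<Union>C"
        then obtain X where "X\<in>C" "(x+c,y+c)\<in>X" by blast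
        then show "(x,y) \<in> \<Union>C" using good_canc[OF gC] by blast
      next
        fix n x y assume n: "0 < n" "(nsm n x, nsm n y) \<in> \<Union>C"
        then obtain X where X: "X\<in>C" "(nsm n x, nsm n y)\<in>X" by blast
        then show "(x,y) \<in> \<Union>C" using good_iso[OF gC[OF X(1)] n(1) X(2)] by blast
      qed
      then show ?thesis by auto
    qed
  qed
  from Zorn_Lemma2[OF this] obtain M :: "('g\<times>'g) set" where M: "good_ord M" "\<And>X. good_ord X \<Longrightarrow> M \<subseteq> X \<Longrightarrow> X = M"
    by blast
  have "\<forall>x y. (x,y)\<in>M \<or> (y,x)\<in>M"
  proof (intro allI)
    fix x y show "(x,y)\<in>M \<or> (y,x)\<in>M"
    proof (rule ccontr)
      assume "\<not> ?thesis"
      then have "(y,x) \<notin> M" "(x,y) \<notin> M" by auto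
      from ext_ord_good[OF M(1) this(1)] have "ext_ord M x y = M" using M(2) by blast
      then show False using ext_ord_good(3)[OF M(1) \<open>(y,x)\<notin>M\<close>] \<open>(x,y)\<notin>M\<close> by simp
    qed
  qed
  then show ?thesis using M(1) by blast
qed


lemma subring_simps:
  assumes "is_subring A"
  shows "1 \<in> A" "0 \<in> A" "x \<in> A \<Longrightarrow> y \<in> A \<Longrightarrow> x + y \<in> A"
    "x \<in> A \<Longrightarrow> y \<in> A \<Longrightarrow> x * y \<in> A" "x \<in> A \<Longrightarrow> - x \<in> A"
  using assms unfolding is_subring_def by auto

lemma subring_diff: "is_subring A \<Longrightarrow> x \<in> A \<Longrightarrow> y \<in> A \<Longrightarrow> x - y \<in> A"
  using subring_simps[of A] by (metis diff_conv_add_uminus)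

lemma subring_m1: "is_subring A \<Longrightarrow> -1 \<in> A"
  using subring_simps by blast

lemma subring_sum: "is_subring A \<Longrightarrow> (\<And>k. k \<in> K \<Longrightarrow> f k \<in> A) \<Longrightarrow> sum f K \<in> A"
proof (induction K rule: infinite_finite_induct)
  case (infinite A) then show ?case using subring_simps by simp
next
  case empty then show ?case using subring_simps by simp
next
  case (insert x F)
  have "f x \<in> A" "sum f F \<in> A" using insert by auto
  then show ?case using insert subring_simps(3)[of A] by simp
qed

lemma subring_prod: "is_subring A \<Longrightarrow> (\<And>k. k \<in> K \<Longrightarrow> f k \<in> A) \<Longrightarrow> prod f K \<in> A"
proof (induction K rule: infinite_finite_induct)
  case (infinite A) then show ?case using subring_simps by simp
next
  case empty then show ?case using subring_simps by simp
next
  case (insert x F)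
  have "f x \<in> A" "prod f F \<in> A" using insert by auto
  then show ?case using insert subring_simps(4)[of A] by simp
qed

lemma submod_simps:
  assumes "is_submod A E"
  shows "0 \<in> E" "x \<in> E \<Longrightarrow> y \<in> E \<Longrightarrow> x + y \<in> E" "r \<in> A \<Longrightarrow> x \<in> E \<Longrightarrow> r * x \<in> E"
  using assms unfolding is_submod_def by auto

lemma submod_neg: "is_subring A \<Longrightarrow> is_submod A E \<Longrightarrow> x \<in> E \<Longrightarrow> - x \<in> E"
  by (metis mult_minus1 submod_simps(3) subring_m1)

lemma submod_diff:
  assumes "is_subring A" "is_submod A E" "x \<in> E" "y \<in> E" shows "x - y \<in> E"
proof -
  have "- y \<in> E" using submod_neg[OF assms(1,2,4)] .
  then have "x + - y \<in> E" using submod_simps(2)[OF assms(2) assms(3)] by blast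
  then show ?thesis by simp
qed

lemma submod_sum: "is_submod A E \<Longrightarrow> (\<And>k. k \<in> K \<Longrightarrow> f k \<in> E) \<Longrightarrow> sum f K \<in> E"
proof (induction K rule: infinite_finite_induct)
  case (infinite A) then show ?case using submod_simps by simp
next
  case empty then show ?case using submod_simps by simp
next
  case (insert x F)
  have "f x \<in> E" "sum f F \<in> E" using insert by auto
  then show ?case using insert submod_simps(2)[of A E] by simp
qed

lemma submod_sum_list: "is_submod A E \<Longrightarrow> (\<And>x. x \<in> set xs \<Longrightarrow> f x \<in> E) \<Longrightarrow> sum_list (map f xs) \<in> E"
proof (induction xs)
  case Nil then show ?case using submod_simps(1)[of A E] by simp
next
  case (Cons a xs)
  then have "f a \<in> E" "sum_list (map f xs) \<in> E" by auto
  then show ?case using submod_simps(2)[OF Cons.prems(1)] by simp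
qed

lemma subring_submod: "is_subring A \<Longrightarrow> is_submod A A"
  unfolding is_submod_def is_subring_def by auto

lemma lc_zero: "0 \<in> lin_comb A S"
  unfolding lin_comb_def by (auto intro!: exI[of _ "{}"])

lemma lc_gen: "is_subring A \<Longrightarrow> s \<in> S \<Longrightarrow> s \<in> lin_comb A S"
  unfolding lin_comb_def using subring_simps(1)[of A]
  by (auto intro!: exI[of _ "{s}"] exI[of _ "\<lambda>_. 1"])

lemma lc_add:
  assumes A: "is_subring A" and x: "x \<in> lin_comb A S" and y: "y \<in> lin_comb A S"
  shows "x + y \<in> lin_comb A S"
proof -
  obtain T1 c1 where 1: "finite T1" "T1 \<subseteq> S" "\<forall>t\<in>T1. c1 t \<in> A" "x = (\<Sum>t\<in>T1. c1 t * t)"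
    using x unfolding lin_comb_def by auto
  obtain T2 c2 where 2: "finite T2" "T2 \<subseteq> S" "\<forall>t\<in>T2. c2 t \<in> A" "y = (\<Sum>t\<in>T2. c2 t * t)"
    using y unfolding lin_comb_def by auto
  define c where "c t = (if t \<in> T1 then c1 t else 0) + (if t \<in> T2 then c2 t else 0)" for t
  have "(\<Sum>t\<in>T1 \<union> T2. c t * t) = (\<Sum>t\<in>T1 \<union> T2. (if t \<in> T1 then c1 t * t else 0) + (if t \<in> T2 then c2 t * t else 0))"
    by (rule sum.cong) (auto simp: c_def distrib_right)
  also have "\<dots> = (\<Sum>t\<in>T1 \<union> T2. (if t \<in> T1 then c1 t * t else 0)) + (\<Sum>t\<in>T1 \<union> T2. (if t \<in> T2 then c2 t * t else 0))"
    by (rule sum.distrib)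
  also have "\<dots> = x + y"
    using 1 2 by (simp add: sum.inter_restrict[symmetric] Int_absorb1)
  finally have "x + y = (\<Sum>t\<in>T1 \<union> T2. c t * t)" by simp
  moreover have "\<forall>t\<in>T1 \<union> T2. c t \<in> A" using 1 2 subring_simps[OF A] unfolding c_def by auto
  ultimately show ?thesis unfolding lin_comb_def
    by (intro CollectI exI[of _ "T1 \<union> T2"] exI[of _ c] conjI) (use 1 2 in auto)
qed

lemma lc_smult:
  assumes A: "is_subring A" and r: "r \<in> A" and x: "x \<in> lin_comb A S"
  shows "r * x \<in> lin_comb A S"
proof -
  obtain T c where 1: "finite T" "T \<subseteq> S" "\<forall>t\<in>T. c t \<in> A" "x = (\<Sum>t\<in>T. c t * t)"
    using x unfolding lin_comb_def by auto
  have "r * x = (\<Sum>t\<in>T. (r * c t) * t)" using 1 by (simp add: sum_distrib_left mult.assoc)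
  moreover have "\<forall>t\<in>T. r * c t \<in> A" using 1 r subring_simps[OF A] by auto
  ultimately show ?thesis unfolding lin_comb_def
    by (intro CollectI exI[of _ T] exI[of _ "\<lambda>t. r * c t"] conjI) (use 1 in auto)
qed

lemma lc_submod: "is_subring A \<Longrightarrow> is_submod A (lin_comb A S)"
  unfolding is_submod_def using lc_zero lc_add lc_smult by blast

lemma lc_least:
  assumes E: "is_submod A E" and S: "S \<subseteq> E"
  shows "lin_comb A S \<subseteq> E"
proof
  fix x assume "x \<in> lin_comb A S"
  then obtain T c where 1: "finite T" "T \<subseteq> S" "\<forall>t\<in>T. c t \<in> A" "x = (\<Sum>t\<in>T. c t * t)"
    unfolding lin_comb_def by auto
  show "x \<in> E" unfolding 1(4)
    by (rule submod_sum[OF E]) (use 1 S submod_simps(3)[OF E] in blast)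
qed

lemma lc_mono: "S \<subseteq> S' \<Longrightarrow> lin_comb A S \<subseteq> lin_comb A S'"
  unfolding lin_comb_def by blast

lemma lc_sum: "is_subring A \<Longrightarrow> (\<And>k. k \<in> K \<Longrightarrow> f k \<in> lin_comb A S) \<Longrightarrow> sum f K \<in> lin_comb A S"
  by (rule submod_sum[OF lc_submod])

lemma lc_sub_A: "is_subring A \<Longrightarrow> S \<subseteq> A \<Longrightarrow> lin_comb A S \<subseteq> A"
  using lc_least subring_submod by blast

lemma lc_of_submod: assumes A: "is_subring A" and E: "is_submod A E" shows "lin_comb A E = E"
proof
  show "lin_comb A E \<subseteq> E" by (rule lc_least[OF E order_refl])
  show "E \<subseteq> lin_comb A E" using lc_gen[OF A] by blast
qed

lemma lc_idem_Union:
  assumes A: "is_subring A"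
  shows "lin_comb A (\<Union>i\<in>K. lin_comb A (S i)) = lin_comb A (\<Union>i\<in>K. S i)"
proof
  show "lin_comb A (\<Union>i\<in>K. lin_comb A (S i)) \<subseteq> lin_comb A (\<Union>i\<in>K. S i)"
  proof (rule lc_least[OF lc_submod[OF A]])
    show "(\<Union>i\<in>K. lin_comb A (S i)) \<subseteq> lin_comb A (\<Union>i\<in>K. S i)"
      using lc_mono[of _ "\<Union>i\<in>K. S i" A] by blast
  qed
  show "lin_comb A (\<Union>i\<in>K. S i) \<subseteq> lin_comb A (\<Union>i\<in>K. lin_comb A (S i))"
    by (rule lc_mono) (use lc_gen[OF A] in blast)
qed

lemma fin_gen_lc: "finite S \<Longrightarrow> fin_gen A (lin_comb A S)"
  unfolding fin_gen_def by blast


locale gdom =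
  fixes R :: "'k::field set" and Rg :: "'g::cancel_comm_monoid_add \<Rightarrow> 'k set"
  assumes gd: "graded_domain R Rg"
begin

lemma sub: "is_subring R" using gd unfolding graded_domain_def by auto
lemma Rg_R: "Rg \<alpha> \<subseteq> R" using gd unfolding graded_domain_def by auto
lemma Rg_R': "x \<in> Rg \<alpha> \<Longrightarrow> x \<in> R" using Rg_R by auto
lemma Rg_0: "0 \<in> Rg \<alpha>" using gd unfolding graded_domain_def by auto
lemma Rg_add: "x \<in> Rg \<alpha> \<Longrightarrow> y \<in> Rg \<alpha> \<Longrightarrow> x + y \<in> Rg \<alpha>" using gd unfolding graded_domain_def by auto
lemma Rg_neg: "x \<in> Rg \<alpha> \<Longrightarrow> - x \<in> Rg \<alpha>" using gd unfolding graded_domain_def by auto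
lemma Rg_mult: "x \<in> Rg \<alpha> \<Longrightarrow> y \<in> Rg \<beta> \<Longrightarrow> x * y \<in> Rg (\<alpha> + \<beta>)"
  using gd unfolding graded_domain_def by auto
lemma ex_decomp: "x \<in> R \<Longrightarrow> \<exists>f. hom_decomp Rg f x" using gd unfolding graded_domain_def by auto
lemma uniq_decomp: "hom_decomp Rg f x \<Longrightarrow> hom_decomp Rg g x \<Longrightarrow> f = g"
  using gd unfolding graded_domain_def by blast
lemma torsion: "\<forall>n::nat. \<forall>a b::'g. n > 0 \<longrightarrow> (\<Sum>i<n. a) = (\<Sum>i<n. b) \<longrightarrow> a = b"
  using gd unfolding graded_domain_def torsion_free_quot_def by auto

lemma Rg_sum: "(\<And>k. k \<in> K \<Longrightarrow> f k \<in> Rg \<alpha>) \<Longrightarrow> sum f K \<in> Rg \<alpha>"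
proof (induction K rule: infinite_finite_induct)
  case (infinite A) then show ?case using Rg_0 by simp
next
  case empty then show ?case using Rg_0 by simp
next
  case (insert x F) then show ?case using Rg_add by simp
qed

lemmas Rsimps = subring_simps[OF sub]

definition cp :: "'k \<Rightarrow> 'g \<Rightarrow> 'k" where
  "cp x = (SOME f. hom_decomp Rg f x)"

lemma cp_decomp: "x \<in> R \<Longrightarrow> hom_decomp Rg (cp x) x"
  unfolding cp_def using ex_decomp someI_ex by metis

lemma cp_eq: "hom_decomp Rg f x \<Longrightarrow> cp x = f"
  unfolding cp_def using uniq_decomp someI[of "\<lambda>f. hom_decomp Rg f x" f] by metis

lemma cp_Rg: "x \<in> R \<Longrightarrow> cp x \<alpha> \<in> Rg \<alpha>"
  using cp_decomp unfolding hom_decomp_def by auto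

lemma cp_R: "x \<in> R \<Longrightarrow> cp x \<alpha> \<in> R"
  using cp_Rg Rg_R by auto

lemma cp_fin: "x \<in> R \<Longrightarrow> finite {\<alpha>. cp x \<alpha> \<noteq> 0}"
  using cp_decomp unfolding hom_decomp_def fin_supp_def by auto

lemma cp_sum:
  assumes "x \<in> R" "finite S" "{\<alpha>. cp x \<alpha> \<noteq> 0} \<subseteq> S"
  shows "x = (\<Sum>\<alpha>\<in>S. cp x \<alpha>)"
proof -
  have "x = (\<Sum>\<alpha>\<in>{\<alpha>. cp x \<alpha> \<noteq> 0}. cp x \<alpha>)" using cp_decomp[OF assms(1)] unfolding hom_decomp_def by auto
  also have "\<dots> = (\<Sum>\<alpha>\<in>S. cp x \<alpha>)" by (rule sum.mono_neutral_left) (use assms in auto)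
  finally show ?thesis .
qed

lemma cp_sum_supp: "x \<in> R \<Longrightarrow> x = (\<Sum>\<alpha>\<in>{\<alpha>. cp x \<alpha> \<noteq> 0}. cp x \<alpha>)"
  using cp_sum cp_fin by blast

lemma decomp_intro:
  assumes "finite S" "\<And>\<alpha>. f \<alpha> \<in> Rg \<alpha>" "\<And>\<alpha>. \<alpha> \<notin> S \<Longrightarrow> f \<alpha> = 0" "x = (\<Sum>\<alpha>\<in>S. f \<alpha>)"
  shows "cp x = f"
proof (rule cp_eq)
  have sub: "{\<alpha>. f \<alpha> \<noteq> 0} \<subseteq> S" using assms(3) by auto
  have "x = (\<Sum>\<alpha>\<in>{\<alpha>. f \<alpha> \<noteq> 0}. f \<alpha>)"
    unfolding assms(4) by (rule sum.mono_neutral_right) (use assms sub in auto)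
  then show "hom_decomp Rg f x"
    unfolding hom_decomp_def fin_supp_def using assms(1,2) sub finite_subset by blast
qed

lemma cp_add: "x \<in> R \<Longrightarrow> y \<in> R \<Longrightarrow> cp (x + y) = (\<lambda>\<alpha>. cp x \<alpha> + cp y \<alpha>)"
proof (rule decomp_intro)
  assume x: "x \<in> R" and y: "y \<in> R"
  let ?S = "{\<alpha>. cp x \<alpha> \<noteq> 0} \<union> {\<alpha>. cp y \<alpha> \<noteq> 0}"
  show "finite ?S" using cp_fin x y by auto
  show "\<And>\<alpha>. cp x \<alpha> + cp y \<alpha> \<in> Rg \<alpha>" using cp_Rg x y Rg_add by auto
  show "\<And>\<alpha>. \<alpha> \<notin> ?S \<Longrightarrow> cp x \<alpha> + cp y \<alpha> = 0" by auto
  show "x + y = (\<Sum>\<alpha>\<in>?S. cp x \<alpha> + cp y \<alpha>)"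
    using cp_sum[OF x, of ?S] cp_sum[OF y, of ?S] cp_fin x y by (simp add: sum.distrib)
qed

lemma cp_0: "cp 0 = (\<lambda>\<alpha>. 0)"
  by (rule decomp_intro[of "{}"]) (auto simp: Rg_0)

lemma cp_neg: "x \<in> R \<Longrightarrow> cp (- x) = (\<lambda>\<alpha>. - cp x \<alpha>)"
proof (rule decomp_intro)
  assume x: "x \<in> R"
  let ?S = "{\<alpha>. cp x \<alpha> \<noteq> 0}"
  show "finite ?S" using cp_fin x by auto
  show "\<And>\<alpha>. - cp x \<alpha> \<in> Rg \<alpha>" using cp_Rg x Rg_neg by auto
  show "\<And>\<alpha>. \<alpha> \<notin> ?S \<Longrightarrow> - cp x \<alpha> = 0" by auto
  show "- x = (\<Sum>\<alpha>\<in>?S. - cp x \<alpha>)"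
    using cp_sum[OF x, of ?S] cp_fin x by (simp add: sum_negf)
qed

lemma cp_sumK: "(\<And>k. k \<in> K \<Longrightarrow> f k \<in> R) \<Longrightarrow> cp (sum f K) \<alpha> = (\<Sum>k\<in>K. cp (f k) \<alpha>)"
proof (induction K rule: infinite_finite_induct)
  case (infinite A) then show ?case using cp_0 by simp
next
  case empty then show ?case using cp_0 by simp
next
  case (insert x F)
  have "sum f F \<in> R" by (rule subring_sum[OF sub]) (use insert.prems in auto)
  then show ?case using insert cp_add by simp
qed

lemma cp_hom: "x \<in> Rg \<alpha> \<Longrightarrow> cp x = (\<lambda>\<beta>. if \<beta> = \<alpha> then x else 0)"
  by (rule decomp_intro[of "{\<alpha>}"]) (auto simp: Rg_0)

lemma cp_mult:
  assumes x: "x \<in> R" and y: "y \<in> R" and S: "finite S" "{\<alpha>. cp x \<alpha> \<noteq> 0} \<subseteq> S"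
    and T: "finite T" "{\<alpha>. cp y \<alpha> \<noteq> 0} \<subseteq> T"
  shows "cp (x * y) \<delta> = (\<Sum>p\<in>{p\<in>S \<times> T. fst p + snd p = \<delta>}. cp x (fst p) * cp y (snd p))"
proof -
  define h where "h \<delta> = (\<Sum>p\<in>{p\<in>S \<times> T. fst p + snd p = \<delta>}. cp x (fst p) * cp y (snd p))" for \<delta>
  let ?D = "(\<lambda>p. fst p + snd p) ` (S \<times> T)"
  have "cp (x * y) = h"
  proof (rule decomp_intro)
    show "finite ?D" using S T by auto
    show "h \<delta> \<in> Rg \<delta>" for \<delta>
      unfolding h_def by (rule Rg_sum) (auto intro: Rg_mult cp_Rg x y)
    show "h \<delta> = 0" if "\<delta> \<notin> ?D" for \<delta>
    proof -
      have e: "{p\<in>S \<times> T. fst p + snd p = \<delta>} = {}" using that by force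
      show ?thesis unfolding h_def by (simp only: e sum.empty)
    qed
    have "x * y = (\<Sum>a\<in>S. cp x a) * (\<Sum>b\<in>T. cp y b)" using cp_sum x y S T by metis
    also have "\<dots> = (\<Sum>p\<in>S \<times> T. cp x (fst p) * cp y (snd p))"
      by (simp add: sum_product sum.cartesian_product case_prod_beta)
    also have "\<dots> = (\<Sum>\<delta>\<in>?D. h \<delta>)"
      unfolding h_def using sum.image_gen[of "S \<times> T" "\<lambda>p. cp x (fst p) * cp y (snd p)" "\<lambda>p. fst p + snd p"] S T by simp
    finally show "x * y = (\<Sum>\<delta>\<in>?D. h \<delta>)" .
  qed
  then show ?thesis unfolding h_def by simp
qed

lemma hom_decomp_weaken: "hom_decomp (\<lambda>\<alpha>. I \<inter> Rg \<alpha>) f x \<Longrightarrow> hom_decomp Rg f x"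
  unfolding hom_decomp_def by auto

definition hset :: "'k set \<Rightarrow> bool" where
  "hset E \<longleftrightarrow> (\<forall>x\<in>E. \<forall>\<alpha>. cp x \<alpha> \<in> E)"

lemma hom_ideal_hset: "hom_ideal R Rg I \<Longrightarrow> hset I"
  unfolding hom_ideal_def hset_def
proof (intro ballI allI, elim conjE)
  fix x \<alpha> assume "\<forall>x\<in>I. \<exists>f. hom_decomp (\<lambda>\<alpha>. I \<inter> Rg \<alpha>) f x" "x \<in> I"
  then obtain f where f: "hom_decomp (\<lambda>\<alpha>. I \<inter> Rg \<alpha>) f x" by blast
  then have "cp x = f" using cp_eq hom_decomp_weaken by blast
  then show "cp x \<alpha> \<in> I" using f unfolding hom_decomp_def by auto
qed

lemma cp_all_in: "x \<in> R \<Longrightarrow> is_submod R P \<Longrightarrow> (\<And>\<alpha>. cp x \<alpha> \<in> P) \<Longrightarrow> x \<in> P"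
  using cp_sum_supp submod_sum by metis

lemma hset_lc:
  assumes S: "S \<subseteq> R" and h: "\<And>s \<alpha>. s \<in> S \<Longrightarrow> cp s \<alpha> \<in> lin_comb R S"
  shows "hset (lin_comb R S)"
proof -
  let ?L = "lin_comb R S"
  have LR: "?L \<subseteq> R" using lc_sub_A[OF sub S] .
  let ?E = "{x\<in>?L. \<forall>\<alpha>. cp x \<alpha> \<in> ?L}"
  have "is_submod R ?E"
    unfolding is_submod_def
  proof (intro conjI ballI)
    show "0 \<in> ?E" using lc_zero cp_0 by auto
  next
    fix x y assume x: "x \<in> ?E" and y: "y \<in> ?E"
    have xR: "x \<in> R" "y \<in> R" using x y LR by auto
    have "cp (x + y) \<alpha> \<in> ?L" for \<alpha> using cp_add[OF xR] lc_add[OF sub] x y by auto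
    then show "x + y \<in> ?E" using lc_add[OF sub] x y by auto
  next
    fix r x assume r: "r \<in> R" and x: "x \<in> ?E"
    have xR: "x \<in> R" using x LR by auto
    have "cp (r * x) \<alpha> \<in> ?L" for \<alpha>
      unfolding cp_mult[OF r xR cp_fin[OF r] order_refl cp_fin[OF xR] order_refl]
      by (rule lc_sum[OF sub]) (use x cp_R[OF r] lc_smult[OF sub] in auto)
    then show "r * x \<in> ?E" using x r lc_smult[OF sub] by auto
  qed
  moreover have "S \<subseteq> ?E" using lc_gen[OF sub] h by auto
  ultimately have "?L \<subseteq> ?E" by (rule lc_least)
  then show ?thesis unfolding hset_def by auto
qed

lemma hset_homgen:
  assumes "S \<subseteq> (\<Union>\<alpha>. Rg \<alpha>)" shows "hset (lin_comb R S)"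
proof (rule hset_lc)
  show "S \<subseteq> R" using assms Rg_R by auto
  fix s \<alpha> assume "s \<in> S"
  then obtain \<beta> where "s \<in> Rg \<beta>" using assms by auto
  then show "cp s \<alpha> \<in> lin_comb R S" using cp_hom lc_gen[OF sub] lc_zero \<open>s\<in>S\<close> by auto
qed

end


lemma finite_min_rel:
  assumes "finite A" "A \<noteq> {}" "\<forall>x y. (x,y)\<in>r \<or> (y,x)\<in>r" "good_ord r"
  shows "\<exists>m\<in>A. \<forall>x\<in>A. (m,x)\<in>r"
  using assms(1,2)
proof (induction A rule: finite_ne_induct)
  case (singleton x) then show ?case using assms(3) by auto
next
  case (insert x F)
  then obtain m where m: "m \<in> F" "\<forall>y\<in>F. (m,y)\<in>r" by auto
  show ?case
  proof (cases "(m,x)\<in>r")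
    case True then show ?thesis using m by auto
  next
    case False then have "(x,m)\<in>r" using assms(3) by blast
    then have "\<forall>y\<in>F. (x,y)\<in>r" using m good_trans[OF assms(4)] by blast
    then show ?thesis using good_refl[OF assms(4)] by blast
  qed
qed

lemma good_strict:
  assumes g: "good_ord r" and "(a0,a)\<in>r" "(b0,b)\<in>r" "a + b = a0 + b0"
  shows "a = a0 \<and> b = b0"
proof -
  have 1: "(a0+b0, a+b0)\<in>r" using good_compat[OF g assms(2)] .
  have "(b0+a, b+a)\<in>r" using good_compat[OF g assms(3)] .
  then have 2: "(a+b0, a0+b0)\<in>r" using assms(4) by (simp add: add.commute)
  have "a + b0 = a0 + b0" using good_anti[OF g 2 1] .
  then have "a = a0" by simp
  then show ?thesis using assms(4) by simp
qed

context gdom begin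

lemma hprime_prime:
  assumes P: "is_ideal R P" "hset P"
    and gp: "\<forall>a b \<alpha> \<beta>. a \<in> Rg \<alpha> \<longrightarrow> b \<in> Rg \<beta> \<longrightarrow> a * b \<in> P \<longrightarrow> a \<in> P \<or> b \<in> P"
    and a: "a \<in> R" "a \<notin> P" and b: "b \<in> R" "b \<notin> P"
  shows "a * b \<notin> P"
proof
  assume ab: "a * b \<in> P"
  have PM: "is_submod R P" and PR: "P \<subseteq> R" using P unfolding is_ideal_def by auto
  obtain r :: "('g \<times> 'g) set" where r: "good_ord r" "\<forall>x y. (x,y)\<in>r \<or> (y,x)\<in>r" using exists_total_order[OF torsion] by blast
  let ?Sa = "{\<alpha>. cp a \<alpha> \<noteq> 0}" and ?Sb = "{\<alpha>. cp b \<alpha> \<noteq> 0}"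
  let ?A = "{\<alpha>. cp a \<alpha> \<notin> P}" and ?B = "{\<alpha>. cp b \<alpha> \<notin> P}"
  have z: "0 \<in> P" using submod_simps(1)[OF PM] .
  have A_sub: "?A \<subseteq> ?Sa" and B_sub: "?B \<subseteq> ?Sb" using z by auto
  have finA: "finite ?A" using finite_subset[OF A_sub cp_fin[OF a(1)]] .
  have finB: "finite ?B" using finite_subset[OF B_sub cp_fin[OF b(1)]] .
  have neA: "?A \<noteq> {}" using cp_all_in[OF a(1) PM] a(2) by blast
  have neB: "?B \<noteq> {}" using cp_all_in[OF b(1) PM] b(2) by blast
  have tr: "\<And>x y z. (x,y)\<in>r \<Longrightarrow> (y,z)\<in>r \<Longrightarrow> (x,z)\<in>r" using good_trans[OF r(1)] by blast
  obtain a0 where a0: "a0 \<in> ?A" "\<forall>x\<in>?A. (a0,x)\<in>r"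
    using finite_min_rel[OF finA neA r(2) r(1)] by blast
  obtain b0 where b0: "b0 \<in> ?B" "\<forall>x\<in>?B. (b0,x)\<in>r"
    using finite_min_rel[OF finB neB r(2) r(1)] by blast
  let ?Q = "{p\<in>?Sa \<times> ?Sb. fst p + snd p = a0 + b0}"
  let ?t = "\<lambda>p. cp a (fst p) * cp b (snd p)"
  have c: "cp (a*b) (a0+b0) = (\<Sum>p\<in>?Q. ?t p)"
    using cp_mult[OF a(1) b(1) cp_fin[OF a(1)] order_refl cp_fin[OF b(1)] order_refl] .
  have finQ: "finite ?Q" using cp_fin[OF a(1)] cp_fin[OF b(1)] by auto
  have inQ: "(a0,b0) \<in> ?Q" using a0 b0 z by auto
  have rest: "(\<Sum>p\<in>?Q - {(a0,b0)}. ?t p) \<in> P"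
  proof (rule submod_sum[OF PM])
    fix p assume p: "p \<in> ?Q - {(a0,b0)}"
    obtain x y where xy: "p = (x,y)" by (cases p)
    show "?t p \<in> P"
    proof (cases "cp a x \<in> P")
      case True
      then have "cp b y * cp a x \<in> P" using submod_simps(3)[OF PM cp_R[OF b(1)]] by blast
      then show ?thesis using xy by (simp add: mult.commute)
    next
      case False note fx = this
      show ?thesis
      proof (cases "cp b y \<in> P")
        case True
        then show ?thesis using xy submod_simps(3)[OF PM cp_R[OF a(1)]] by simp
      next
        case False
        have "(a0,x)\<in>r" "(b0,y)\<in>r" using a0 b0 fx False by auto
        moreover have "x + y = a0 + b0" using p xy by auto
        ultimately have "x = a0 \<and> y = b0" using good_strict[OF r(1)] by blast
        then show ?thesis using p xy by auto
      qed
    qed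
  qed
  have eq: "cp (a*b) (a0+b0) = ?t (a0,b0) + (\<Sum>p\<in>?Q - {(a0,b0)}. ?t p)"
    unfolding c by (rule sum.remove[OF finQ inQ])
  have cin: "cp (a*b) (a0+b0) \<in> P" using P(2) ab unfolding hset_def by blast
  have "?t (a0,b0) = cp (a*b) (a0+b0) - (\<Sum>p\<in>?Q - {(a0,b0)}. ?t p)"
    unfolding eq by simp
  also have "\<dots> \<in> P" by (rule submod_diff[OF sub PM cin rest])
  finally have "cp a a0 * cp b b0 \<in> P" by simp
  then have "cp a a0 \<in> P \<or> cp b b0 \<in> P" using gp cp_Rg[OF a(1), of a0] cp_Rg[OF b(1), of b0] by blast
  then show False using a0 b0 by auto
qed

end

lemma poly_prime:
  assumes R: "is_subring R" and PM: "is_submod R P" and PR: "P \<subseteq> R"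
    and pr: "\<And>a b. a \<in> R \<Longrightarrow> b \<in> R \<Longrightarrow> a * b \<in> P \<Longrightarrow> a \<in> P \<or> b \<in> P"
    and f: "f \<in> poly_over R" and g: "g \<in> poly_over R"
    and fi: "coeff f i \<notin> P" and gj: "coeff g j \<notin> P"
  shows "\<exists>n. coeff (f * g) n \<notin> P"
proof -
  define i0 where "i0 = (LEAST i. coeff f i \<notin> P)"
  define j0 where "j0 = (LEAST j. coeff g j \<notin> P)"
  have i0: "coeff f i0 \<notin> P" "\<And>i. i < i0 \<Longrightarrow> coeff f i \<in> P"
    unfolding i0_def by (rule LeastI[of "\<lambda>i. coeff f i \<notin> P", OF fi]) (use not_less_Least[of _ "\<lambda>i. coeff f i \<notin> P"] in blast)
  have j0: "coeff g j0 \<notin> P" "\<And>j. j < j0 \<Longrightarrow> coeff g j \<in> P"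
    unfolding j0_def by (rule LeastI[of "\<lambda>j. coeff g j \<notin> P", OF gj]) (use not_less_Least[of _ "\<lambda>j. coeff g j \<notin> P"] in blast)
  have fR: "\<And>i. coeff f i \<in> R" and gR: "\<And>i. coeff g i \<in> R" using f g unfolding poly_over_def by auto
  let ?n = "i0 + j0"
  let ?t = "\<lambda>i. coeff f i * coeff g (?n - i)"
  have c: "coeff (f*g) ?n = (\<Sum>i\<le>?n. ?t i)" by (simp add: coeff_mult)
  have rest: "(\<Sum>i\<in>{..?n} - {i0}. ?t i) \<in> P"
  proof (rule submod_sum[OF PM])
    fix i assume i: "i \<in> {..?n} - {i0}"
    show "?t i \<in> P"
    proof (cases "i < i0")
      case True
      then have "coeff g (?n - i) * coeff f i \<in> P" using submod_simps(3)[OF PM gR i0(2)] by blast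
      then show ?thesis by (simp add: mult.commute)
    next
      case False
      then have "?n - i < j0" using i by auto
      then show ?thesis using submod_simps(3)[OF PM fR j0(2)] by blast
    qed
  qed
  have eq: "coeff (f*g) ?n = ?t i0 + (\<Sum>i\<in>{..?n} - {i0}. ?t i)"
    unfolding c by (rule sum.remove) auto
  have nt: "?t i0 \<notin> P" using pr[OF fR gR] i0(1) j0(1) by auto
  show ?thesis
  proof (rule ccontr)
    assume "\<not> ?thesis"
    then have cin: "coeff (f*g) ?n \<in> P" by blast
    have "?t i0 = coeff (f*g) ?n - (\<Sum>i\<in>{..?n} - {i0}. ?t i)" unfolding eq by simp
    also have "\<dots> \<in> P" by (rule submod_diff[OF R PM cin rest])
    finally show False using nt by blast
  qed
qed


lemma poly_over_coeff: "f \<in> poly_over R \<Longrightarrow> coeff f i \<in> R"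
  unfolding poly_over_def by auto

lemma poly_over_mult:
  assumes R: "is_subring R" and f: "f \<in> poly_over R" and g: "g \<in> poly_over R" shows "f * g \<in> poly_over R"
  unfolding poly_over_def
proof (intro CollectI allI)
  fix n
  have "(\<Sum>i\<le>n. coeff f i * coeff g (n - i)) \<in> R"
  proof (rule subring_sum[OF R])
    fix i show "coeff f i * coeff g (n - i) \<in> R"
      using f g subring_simps(4)[OF R] unfolding poly_over_def by blast
  qed
  then show "coeff (f * g) n \<in> R" by (simp add: coeff_mult)
qed

lemma poly_over_add: "is_subring R \<Longrightarrow> f \<in> poly_over R \<Longrightarrow> g \<in> poly_over R \<Longrightarrow> f + g \<in> poly_over R"
  unfolding poly_over_def by (simp add: subring_simps(3))

lemma poly_over_const: "is_subring R \<Longrightarrow> a \<in> R \<Longrightarrow> [:a:] \<in> poly_over R"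
  unfolding poly_over_def by (auto simp: coeff_pCons split: nat.splits intro: subring_simps)

lemma poly_over_monom: "is_subring R \<Longrightarrow> a \<in> R \<Longrightarrow> monom a n \<in> poly_over R"
  unfolding poly_over_def by (auto simp: coeff_monom intro: subring_simps)

lemma poly_over_1: "is_subring R \<Longrightarrow> 1 \<in> poly_over R"
  using poly_over_const[of R 1] subring_simps(1)[of R] by (simp add: one_pCons)

lemma lc_zero_gens: "(\<And>s. s \<in> S \<Longrightarrow> s = 0) \<Longrightarrow> lin_comb A S \<subseteq> {0}"
  by (rule lc_least) (auto simp: is_submod_def)

context gdom begin

lemma nz_ideal: "is_ideal R E \<Longrightarrow> E \<noteq> {0} \<Longrightarrow> nz_submod R E"
  unfolding is_ideal_def nz_submod_def by auto

lemma R_nz: "nz_submod R R"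
  unfolding nz_submod_def using subring_submod[OF sub] Rsimps(1) by auto

lemma frac_of: "nz_submod R F \<Longrightarrow> F \<subseteq> R \<Longrightarrow> nz_frac_ideal R F"
  unfolding nz_frac_ideal_def using Rsimps(1) by (auto intro!: bexI[of _ 1])

lemma lc_nz:
  assumes "s \<in> S" "s \<noteq> 0" shows "nz_submod R (lin_comb R S)"
  unfolding nz_submod_def using lc_submod[OF sub] lc_gen[OF sub assms(1)] assms(2) by auto

lemma lc_ideal: "S \<subseteq> R \<Longrightarrow> is_ideal R (lin_comb R S)"
  unfolding is_ideal_def using lc_submod[OF sub] lc_sub_A[OF sub] by auto

lemma hc_eq: "x \<in> R \<Longrightarrow> hom_comps Rg x = range (cp x)"
proof -
  assume x: "x \<in> R"
  have "hom_comps Rg x = {y. \<exists>\<alpha>. y = cp x \<alpha>}"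
    unfolding hom_comps_def
  proof (intro Collect_cong iffI)
    fix y assume "\<exists>f \<alpha>. hom_decomp Rg f x \<and> y = f \<alpha>"
    then obtain f \<alpha> where "hom_decomp Rg f x" "y = f \<alpha>" by blast
    then show "\<exists>\<alpha>. y = cp x \<alpha>" using cp_eq by metis
  next
    fix y assume "\<exists>\<alpha>. y = cp x \<alpha>"
    then show "\<exists>f \<alpha>. hom_decomp Rg f x \<and> y = f \<alpha>" using cp_decomp[OF x] by blast
  qed
  then show ?thesis by auto
qed

lemma hc_fin: "x \<in> R \<Longrightarrow> finite (hom_comps Rg x)"
proof -
  assume x: "x \<in> R"
  have "range (cp x) \<subseteq> insert 0 (cp x ` {\<alpha>. cp x \<alpha> \<noteq> 0})" by auto
  moreover have "finite (insert 0 (cp x ` {\<alpha>. cp x \<alpha> \<noteq> 0}))" using cp_fin[OF x] by simp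
  ultimately have "finite (range (cp x))" by (rule finite_subset)
  then show ?thesis using hc_eq[OF x] by simp
qed

lemma hc_hom: "x \<in> R \<Longrightarrow> hom_comps Rg x \<subseteq> (\<Union>\<alpha>. Rg \<alpha>)"
  using hc_eq cp_Rg by auto

definition gens :: "'k poly \<Rightarrow> 'k set" where
  "gens f = (\<Union>i\<le>degree f. hom_comps Rg (coeff f i))"

lemma CA_eq: "content_A R Rg f = lin_comb R (gens f)"
  unfolding content_A_def content_C_def gens_def by (rule lc_idem_Union[OF sub])

lemma gens_fin: "f \<in> poly_over R \<Longrightarrow> finite (gens f)"
  unfolding gens_def using hc_fin poly_over_coeff by auto

lemma gens_hom: "f \<in> poly_over R \<Longrightarrow> gens f \<subseteq> (\<Union>\<alpha>. Rg \<alpha>)"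
  unfolding gens_def using hc_hom poly_over_coeff by blast

lemma gens_R: "f \<in> poly_over R \<Longrightarrow> gens f \<subseteq> R"
  using gens_hom Rg_R by blast

lemma CA_ideal: "f \<in> poly_over R \<Longrightarrow> is_ideal R (content_A R Rg f)"
  unfolding CA_eq using lc_ideal gens_R by blast

lemma CA_hset: "f \<in> poly_over R \<Longrightarrow> hset (content_A R Rg f)"
  unfolding CA_eq using hset_homgen gens_hom by blast

lemma CA_fg: "f \<in> poly_over R \<Longrightarrow> fin_gen R (content_A R Rg f)"
  unfolding CA_eq using fin_gen_lc gens_fin by blast

lemma coeff_CA:
  assumes f: "f \<in> poly_over R" shows "coeff f i \<in> content_A R Rg f"
proof (cases "i \<le> degree f")
  case True
  have c: "coeff f i \<in> R" using poly_over_coeff[OF f] .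
  have "cp (coeff f i) \<alpha> \<in> gens f" for \<alpha> unfolding gens_def using True hc_eq[OF c] by blast
  then have "cp (coeff f i) \<alpha> \<in> content_A R Rg f" for \<alpha> unfolding CA_eq using lc_gen[OF sub] by blast
  then show ?thesis using cp_all_in[OF c] CA_ideal[OF f] unfolding is_ideal_def by blast
next
  case False then show ?thesis using lc_zero unfolding CA_eq by (simp add: coeff_eq_0)
qed

lemma CA_nz: "f \<in> poly_over R \<Longrightarrow> f \<noteq> 0 \<Longrightarrow> nz_submod R (content_A R Rg f)"
proof -
  assume f: "f \<in> poly_over R" "f \<noteq> 0"
  then obtain i where "coeff f i \<noteq> 0" by (metis leading_coeff_0_iff)
  then show ?thesis using coeff_CA[OF f(1), of i] CA_ideal[OF f(1)] nz_ideal by blast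
qed

lemma CA_sub:
  assumes f: "f \<in> poly_over R" and P: "is_ideal R P" "hset P" and c: "\<And>i. coeff f i \<in> P"
  shows "content_A R Rg f \<subseteq> P"
  unfolding CA_eq
proof (rule lc_least)
  show "is_submod R P" using P unfolding is_ideal_def by auto
  show "gens f \<subseteq> P"
  proof
    fix z assume "z \<in> gens f"
    then obtain i where "z \<in> hom_comps Rg (coeff f i)" unfolding gens_def by blast
    then obtain \<alpha> where "z = cp (coeff f i) \<alpha>" using hc_eq[OF poly_over_coeff[OF f]] by blast
    then show "z \<in> P" using c[of i] P(2) unfolding hset_def by blast
  qed
qed

lemma CA_one: "content_A R Rg 1 = R"
proof -
  have "1 \<in> poly_over R" using poly_over_1[OF sub] .
  then have "coeff 1 0 \<in> content_A R Rg 1" by (rule coeff_CA)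
  then have "1 \<in> content_A R Rg 1" by simp
  moreover have "is_ideal R (content_A R Rg 1)" using CA_ideal[OF poly_over_1[OF sub]] .
  ultimately show ?thesis unfolding is_ideal_def using submod_simps(3)[of R "content_A R Rg 1" _ 1] by force
qed

end

locale gss = gdom R Rg for R :: "'k::field set" and Rg :: "'g::cancel_comm_monoid_add \<Rightarrow> 'k set" +
  fixes st :: "'k set \<Rightarrow> 'k set"
  assumes ss: "semistar R st"
begin

lemma st_nz: "nz_submod R E \<Longrightarrow> nz_submod R (st E)" using ss unfolding semistar_def by auto
lemma st_sm: "nz_submod R E \<Longrightarrow> is_submod R (st E)" using st_nz unfolding nz_submod_def by auto
lemma st_scal: "x \<noteq> 0 \<Longrightarrow> nz_submod R E \<Longrightarrow> st (scal x E) = scal x (st E)" using ss unfolding semistar_def by auto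
lemma st_mono: "nz_submod R E \<Longrightarrow> nz_submod R F \<Longrightarrow> E \<subseteq> F \<Longrightarrow> st E \<subseteq> st F" using ss unfolding semistar_def by auto
lemma st_ext: "nz_submod R E \<Longrightarrow> E \<subseteq> st E" using ss unfolding semistar_def by auto
lemma st_idem: "nz_submod R E \<Longrightarrow> st (st E) = st E" using ss unfolding semistar_def by auto

lemma one_st:
  assumes E: "nz_submod R E" "E \<subseteq> R" and one: "1 \<in> st E"
  shows "st E = st R"
proof
  show "st E \<subseteq> st R" using st_mono[OF E(1) R_nz E(2)] .
  have "R \<subseteq> st E" using submod_simps(3)[OF st_sm[OF E(1)] _ one] by auto
  then have "st R \<subseteq> st (st E)" using st_mono[OF R_nz st_nz[OF E(1)]] by blast
  then show "st R \<subseteq> st E" using st_idem[OF E(1)] by simp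
qed

lemma one_stR: "1 \<in> st R"
  using st_ext[OF R_nz] Rsimps(1) by auto

lemma scal_nz: "x \<noteq> 0 \<Longrightarrow> nz_submod R F \<Longrightarrow> nz_submod R (scal x F)"
  unfolding nz_submod_def is_submod_def scal_def
proof (elim conjE, intro conjI ballI)
  fix F :: "'k set" assume x: "x \<noteq> 0" and F: "0 \<in> F" "\<forall>a\<in>F. \<forall>b\<in>F. a + b \<in> F" "\<forall>r\<in>R. \<forall>a\<in>F. r * a \<in> F" "F \<noteq> {0}"
  show "0 \<in> (*) x ` F" using F(1) by force
  show "a + b \<in> (*) x ` F" if "a \<in> (*) x ` F" "b \<in> (*) x ` F" for a b
    using that F(2) by (auto simp: distrib_left[symmetric])
  show "r * a \<in> (*) x ` F" if ra: "r \<in> R" "a \<in> (*) x ` F" for r a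
  proof -
    obtain c where c: "c \<in> F" "a = x * c" using ra by auto
    have "r * c \<in> F" using F(3) ra(1) c(1) by blast
    moreover have "r * a = x * (r * c)" using c(2) by (simp add: ac_simps)
    ultimately show ?thesis by blast
  qed
  show "(*) x ` F \<noteq> {0}"
  proof
    assume e: "(*) x ` F = {0}"
    obtain c where c: "c \<in> F" "c \<noteq> 0" using F(4) F(1) by blast
    have "x * c \<in> (*) x ` F" using c(1) by blast
    then show False using e c(2) x by simp
  qed
qed

lemma prod_one:
  assumes S1: "s1 \<in> S1" "s1 \<noteq> 0" and S2: "s2 \<in> S2" "s2 \<noteq> 0"
    and o1: "1 \<in> st (lin_comb R S1)" and o2: "1 \<in> st (lin_comb R S2)"
  shows "1 \<in> st (lin_comb R {x * y | x y. x \<in> S1 \<and> y \<in> S2})"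
proof -
  let ?F = "lin_comb R {x * y | x y. x \<in> S1 \<and> y \<in> S2}"
  have Fnz: "nz_submod R ?F" by (rule lc_nz[of "s1*s2"]) (use S1 S2 in auto)
  have F2nz: "nz_submod R (lin_comb R S2)" using lc_nz S2 by blast
  have F1nz: "nz_submod R (lin_comb R S1)" using lc_nz S1 by blast
  have "S1 \<subseteq> st ?F"
  proof
    fix x assume x: "x \<in> S1"
    show "x \<in> st ?F"
    proof (cases "x = 0")
      case True then show ?thesis using submod_simps(1)[OF st_sm[OF Fnz]] by simp
    next
      case False
      let ?E = "{z. x * z \<in> ?F}"
      have "is_submod R ?E"
        unfolding is_submod_def
      proof (intro conjI ballI)
        show "0 \<in> ?E" using lc_zero by simp
        show "a + b \<in> ?E" if "a \<in> ?E" "b \<in> ?E" for a b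
          using lc_add[OF sub, of "x * a" _ "x * b"] that by (simp add: distrib_left)
        show "r * a \<in> ?E" if "r \<in> R" "a \<in> ?E" for r a
        proof -
          have "r * (x * a) \<in> ?F" using lc_smult[OF sub that(1)] that(2) by simp
          then show ?thesis by (simp add: mult.left_commute)
        qed
      qed
      moreover have "S2 \<subseteq> ?E"
      proof
        fix y assume y: "y \<in> S2"
        have "x * y \<in> {x * y | x y. x \<in> S1 \<and> y \<in> S2}"
          by (rule CollectI, rule exI[of _ x], rule exI[of _ y]) (use x y in simp)
        then have "x * y \<in> ?F" by (rule lc_gen[OF sub])
        then show "y \<in> ?E" by simp
      qed
      ultimately have "lin_comb R S2 \<subseteq> ?E" by (rule lc_least)
      then have sc: "scal x (lin_comb R S2) \<subseteq> ?F" unfolding scal_def by auto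
      have "st (scal x (lin_comb R S2)) \<subseteq> st ?F" by (rule st_mono[OF scal_nz[OF False F2nz] Fnz sc])
      then have "scal x (st (lin_comb R S2)) \<subseteq> st ?F" using st_scal[OF False F2nz] by simp
      moreover have "x * 1 \<in> scal x (st (lin_comb R S2))" using o2 unfolding scal_def by blast
      ultimately show ?thesis by auto
    qed
  qed
  then have "lin_comb R S1 \<subseteq> st ?F" by (rule lc_least[OF st_sm[OF Fnz]])
  then have "st (lin_comb R S1) \<subseteq> st (st ?F)" by (rule st_mono[OF F1nz st_nz[OF Fnz]])
  then show ?thesis using o1 st_idem[OF Fnz] by auto
qed

lemma star_f_sub: assumes "E \<subseteq> R" shows "star_f R st E \<subseteq> st R"
proof
  fix z assume "z \<in> star_f R st E"
  then obtain F where F: "F \<subseteq> E" "nz_frac_ideal R F" "z \<in> st F" unfolding star_f_def by blast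
  have "st F \<subseteq> st R" by (rule st_mono) (use F assms R_nz in \<open>auto simp: nz_frac_ideal_def\<close>)
  then show "z \<in> st R" using F by blast
qed

lemma star_f_in: "F \<subseteq> E \<Longrightarrow> nz_frac_ideal R F \<Longrightarrow> fin_gen R F \<Longrightarrow> st F \<subseteq> star_f R st E"
  unfolding star_f_def by blast

lemma star_f_le_st: assumes "nz_submod R E" shows "star_f R st E \<subseteq> st E"
proof
  fix z assume "z \<in> star_f R st E"
  then obtain F where F: "F \<subseteq> E" "nz_frac_ideal R F" "z \<in> st F" unfolding star_f_def by blast
  have "st F \<subseteq> st E" by (rule st_mono) (use F assms in \<open>auto simp: nz_frac_ideal_def\<close>)
  then show "z \<in> st E" using F by blast
qed

end


lemma fin_chain_bound:
  assumes ch: "\<And>X Y. X \<in> C \<Longrightarrow> Y \<in> C \<Longrightarrow> X \<subseteq> Y \<or> Y \<subseteq> X" and ne: "C \<noteq> {}"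
    and S: "finite S" "S \<subseteq> \<Union>C"
  shows "\<exists>J\<in>C. S \<subseteq> J"
  using S
proof (induction S rule: finite_induct)
  case empty then show ?case using ne by auto
next
  case (insert x F)
  then obtain J1 where J1: "J1 \<in> C" "F \<subseteq> J1" by auto
  obtain J2 where J2: "J2 \<in> C" "x \<in> J2" using insert by auto
  show ?case using ch[OF J1(1) J2(1)] J1 J2 by blast
qed

context gss begin

definition Fam :: "'k set \<Rightarrow> 'k set set" where
  "Fam A = {J. is_ideal R J \<and> hset J \<and> A \<subseteq> J \<and> 1 \<notin> star_f R st J}"

lemma union_chain_ok:
  assumes C: "C \<in> chains (Fam A)" "C \<noteq> {}"
  shows "\<Union>C \<in> Fam A"
proof -
  have CF: "\<And>J. J \<in> C \<Longrightarrow> J \<in> Fam A" using C unfolding chains_def by auto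
  have ch: "\<And>X Y. X \<in> C \<Longrightarrow> Y \<in> C \<Longrightarrow> X \<subseteq> Y \<or> Y \<subseteq> X"
    using C unfolding chains_def chain_subset_def by auto
  have two: "\<exists>J\<in>C. x \<in> J \<and> y \<in> J" if "x \<in> \<Union>C" "y \<in> \<Union>C" for x y
    using fin_chain_bound[OF ch C(2), of "{x,y}"] that by auto
  obtain J0 where J0: "J0 \<in> C" using C(2) by auto
  have id: "is_ideal R (\<Union>C)"
    unfolding is_ideal_def is_submod_def
  proof (intro conjI ballI)
    show "0 \<in> \<Union>C" using CF[OF J0] J0 unfolding Fam_def is_ideal_def is_submod_def by auto
    show "x + y \<in> \<Union>C" if "x \<in> \<Union>C" "y \<in> \<Union>C" for x y
      using two[OF that] CF unfolding Fam_def is_ideal_def is_submod_def by blast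
    show "r * x \<in> \<Union>C" if "r \<in> R" "x \<in> \<Union>C" for r x
      using that CF unfolding Fam_def is_ideal_def is_submod_def by blast
    show "\<Union>C \<subseteq> R" using CF unfolding Fam_def is_ideal_def by blast
  qed
  have hs: "hset (\<Union>C)" using CF unfolding Fam_def hset_def by blast
  have AC: "A \<subseteq> \<Union>C" using CF[OF J0] J0 unfolding Fam_def by auto
  have "1 \<notin> star_f R st (\<Union>C)"
  proof
    assume "1 \<in> star_f R st (\<Union>C)"
    then obtain F where F: "F \<subseteq> \<Union>C" "nz_frac_ideal R F" "fin_gen R F" "1 \<in> st F"
      unfolding star_f_def by blast
    obtain S where S: "finite S" "F = lin_comb R S" using F(3) unfolding fin_gen_def by blast
    have "S \<subseteq> F" using S(2) lc_gen[OF sub] by blast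
    then obtain J where J: "J \<in> C" "S \<subseteq> J" using fin_chain_bound[OF ch C(2) S(1)] F(1) by blast
    have "is_submod R J" using CF[OF J(1)] unfolding Fam_def is_ideal_def by auto
    then have "F \<subseteq> J" using lc_least J(2) S(2) by blast
    then have "1 \<in> star_f R st J" using star_f_in F by blast
    then show False using CF[OF J(1)] unfolding Fam_def by auto
  qed
  then show ?thesis unfolding Fam_def using id hs AC by auto
qed

lemma ideal_plus_hom:
  assumes P: "is_ideal R P" "hset P" and a: "a \<in> Rg \<alpha>"
  defines "Pa \<equiv> {p + r * a | p r. p \<in> P \<and> r \<in> R}"
  shows "is_ideal R Pa" "hset Pa" "P \<subseteq> Pa" "a \<in> Pa"
proof -
  have PM: "is_submod R P" and PR: "P \<subseteq> R" using P unfolding is_ideal_def by auto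
  have aR: "a \<in> R" using Rg_R a by auto
  have PaI: "z \<in> Pa" if "p \<in> P" "r \<in> R" "z = p + r * a" for z p r
    unfolding Pa_def using that by blast
  show "P \<subseteq> Pa" unfolding Pa_def using Rsimps(2) by force
  show "a \<in> Pa" unfolding Pa_def using Rsimps(1) submod_simps(1)[OF PM] by force
  show ideal: "is_ideal R Pa"
    unfolding is_ideal_def is_submod_def
  proof (intro conjI ballI)
    show "0 \<in> Pa" unfolding Pa_def using Rsimps(2) submod_simps(1)[OF PM] by force
    show "x + y \<in> Pa" if xy: "x \<in> Pa" "y \<in> Pa" for x y
    proof -
      obtain p r p' r' where pr: "x = p + r * a" "y = p' + r' * a" "p \<in> P" "r \<in> R" "p' \<in> P" "r' \<in> R"
        using xy unfolding Pa_def by auto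
      have 1: "p + p' \<in> P" by (rule submod_simps(2)[OF PM pr(3) pr(5)])
      have 2: "r + r' \<in> R" by (rule Rsimps(3)[OF pr(4) pr(6)])
      show ?thesis by (rule PaI[OF 1 2]) (simp add: pr(1,2) algebra_simps)
    qed
    show "s * x \<in> Pa" if sx: "s \<in> R" "x \<in> Pa" for s x
    proof -
      obtain p r where pr: "x = p + r * a" "p \<in> P" "r \<in> R" using sx unfolding Pa_def by auto
      have 1: "s * p \<in> P" by (rule submod_simps(3)[OF PM sx(1) pr(2)])
      have 2: "s * r \<in> R" by (rule Rsimps(4)[OF sx(1) pr(3)])
      show ?thesis by (rule PaI[OF 1 2]) (simp add: pr(1) algebra_simps)
    qed
    show "Pa \<subseteq> R" unfolding Pa_def using PR aR Rsimps by auto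
  qed
  show "hset Pa"
    unfolding hset_def
  proof (intro ballI allI)
    fix x \<delta> assume "x \<in> Pa"
    then obtain p r where x: "x = p + r * a" "p \<in> P" "r \<in> R" unfolding Pa_def by auto
    have pR: "p \<in> R" using PR x by auto
    have raR: "r * a \<in> R" using Rsimps(4) x(3) aR by auto
    let ?Q = "{q\<in>{\<beta>. cp r \<beta> \<noteq> 0} \<times> {\<alpha>}. fst q + snd q = \<delta>}"
    have "cp (r * a) \<delta> = (\<Sum>q\<in>?Q. cp r (fst q) * cp a (snd q))"
      by (rule cp_mult[OF x(3) aR cp_fin[OF x(3)] order_refl]) (use cp_hom[OF a] in auto)
    also have "\<dots> = (\<Sum>q\<in>?Q. cp r (fst q) * a)"
      by (rule sum.cong) (auto simp: cp_hom[OF a])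
    also have "\<dots> = (\<Sum>q\<in>?Q. cp r (fst q)) * a"
      by (simp add: sum_distrib_right)
    finally have 1: "cp (r * a) \<delta> = (\<Sum>q\<in>?Q. cp r (fst q)) * a" .
    have 2: "(\<Sum>q\<in>?Q. cp r (fst q)) \<in> R" by (rule subring_sum[OF sub]) (rule cp_R[OF x(3)])
    have 3: "cp p \<delta> \<in> P" using P(2) x(2) unfolding hset_def by auto
    have "cp x \<delta> = cp p \<delta> + (\<Sum>q\<in>?Q. cp r (fst q)) * a" unfolding x(1) cp_add[OF pR raR] 1 by simp
    then show "cp x \<delta> \<in> Pa" by (rule PaI[OF 3 2])
  qed
qed

lemma quasi_max:
  assumes A: "is_ideal R A" "hset A" "1 \<notin> star_f R st A"
  obtains P where "is_ideal R P" "hset P" "A \<subseteq> P" "1 \<notin> star_f R st P"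
    "\<forall>a b \<alpha> \<beta>. a \<in> Rg \<alpha> \<longrightarrow> b \<in> Rg \<beta> \<longrightarrow> a * b \<in> P \<longrightarrow> a \<in> P \<or> b \<in> P"
proof -
  have "\<forall>C\<in>chains (Fam A). \<exists>U\<in>Fam A. \<forall>X\<in>C. X \<subseteq> U"
  proof
    fix C assume C: "C \<in> chains (Fam A)"
    show "\<exists>U\<in>Fam A. \<forall>X\<in>C. X \<subseteq> U"
    proof (cases "C = {}")
      case True then show ?thesis using A unfolding Fam_def by auto
    next
      case False then show ?thesis using union_chain_ok[OF C] by blast
    qed
  qed
  from Zorn_Lemma2[OF this] obtain P where P: "P \<in> Fam A" "\<And>X. X \<in> Fam A \<Longrightarrow> P \<subseteq> X \<Longrightarrow> X = P"
    by blast
  have Pi: "is_ideal R P" "hset P" "A \<subseteq> P" "1 \<notin> star_f R st P" using P(1) unfolding Fam_def by auto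
  have PM: "is_submod R P" and PR: "P \<subseteq> R" using Pi unfolding is_ideal_def by auto
  have big: "\<exists>S. finite S \<and> S \<subseteq> P' \<and> 1 \<in> st (lin_comb R S) \<and> (\<exists>s\<in>S. s \<noteq> 0)"
    if "is_ideal R P'" "hset P'" "P \<subseteq> P'" "a \<in> P'" "a \<notin> P" for P' a
  proof -
    have "1 \<in> star_f R st P'"
    proof (rule ccontr)
      assume "1 \<notin> star_f R st P'"
      then have "P' \<in> Fam A" using that Pi unfolding Fam_def by auto
      then show False using P(2) that by blast
    qed
    then obtain F where F: "F \<subseteq> P'" "nz_frac_ideal R F" "fin_gen R F" "1 \<in> st F"
      unfolding star_f_def by blast
    obtain S where S: "finite S" "F = lin_comb R S" using F(3) unfolding fin_gen_def by blast
    have "S \<subseteq> F" using S(2) lc_gen[OF sub] by blast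
    moreover have "\<exists>s\<in>S. s \<noteq> 0"
    proof (rule ccontr)
      assume "\<not> ?thesis"
      then have "F \<subseteq> {0}" using lc_zero_gens S(2) by blast
      then show False using F(2) unfolding nz_frac_ideal_def nz_submod_def is_submod_def by auto
    qed
    ultimately show ?thesis using S F by blast
  qed
  have gp: "a \<in> P \<or> b \<in> P" if ab: "a \<in> Rg \<alpha>" "b \<in> Rg \<beta>" "a * b \<in> P" for a b \<alpha> \<beta>
  proof (rule ccontr)
    assume nab: "\<not> (a \<in> P \<or> b \<in> P)"
    define Pa where "Pa = {p + r * a | p r. p \<in> P \<and> r \<in> R}"
    define Pb where "Pb = {p + r * b | p r. p \<in> P \<and> r \<in> R}"
    note pa = ideal_plus_hom[OF Pi(1,2) ab(1), folded Pa_def]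
    note pb = ideal_plus_hom[OF Pi(1,2) ab(2), folded Pb_def]
    obtain S1 where S1: "finite S1" "S1 \<subseteq> Pa" "1 \<in> st (lin_comb R S1)" "\<exists>s\<in>S1. s \<noteq> 0"
      using big[OF pa(1,2,3,4)] nab by blast
    obtain S2 where S2: "finite S2" "S2 \<subseteq> Pb" "1 \<in> st (lin_comb R S2)" "\<exists>s\<in>S2. s \<noteq> 0"
      using big[OF pb(1,2,3,4)] nab by blast
    obtain s1 s2 where s: "s1 \<in> S1" "s1 \<noteq> 0" "s2 \<in> S2" "s2 \<noteq> 0" using S1(4) S2(4) by blast
    let ?S = "{x * y | x y. x \<in> S1 \<and> y \<in> S2}"
    have one: "1 \<in> st (lin_comb R ?S)" using prod_one[OF s S1(3) S2(3)] .
    have aR: "a \<in> R" and bR: "b \<in> R" using ab Rg_R by auto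
    have SP: "?S \<subseteq> P"
    proof
      fix z assume "z \<in> ?S"
      then obtain x y where z: "z = x * y" "x \<in> Pa" "y \<in> Pb" using S1 S2 by blast
      obtain p r where x: "x = p + r * a" "p \<in> P" "r \<in> R" using z(2) unfolding Pa_def by auto
      obtain p' r' where y: "y = p' + r' * b" "p' \<in> P" "r' \<in> R" using z(3) unfolding Pb_def by auto
      have yR: "y \<in> R" using y PR bR Rsimps by auto
      have "z = y * p + (r * a) * p' + (r * r') * (a * b)"
        unfolding z x y by (simp add: algebra_simps)
      moreover have "y * p \<in> P" using submod_simps(3)[OF PM yR x(2)] .
      moreover have "(r * a) * p' \<in> P" using submod_simps(3)[OF PM _ y(2)] Rsimps(4) x(3) aR by blast
      moreover have "(r * r') * (a * b) \<in> P" using submod_simps(3)[OF PM _ ab(3)] Rsimps(4) x(3) y(3) by blast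
      ultimately show "z \<in> P" using submod_simps(2)[OF PM] by auto
    qed
    have SR: "?S \<subseteq> R" using SP PR by auto
    have fin: "finite ?S"
    proof -
      have "?S = (\<lambda>(x,y). x * y) ` (S1 \<times> S2)" by auto
      then show ?thesis using S1(1) S2(1) by simp
    qed
    have nz: "nz_submod R (lin_comb R ?S)" by (rule lc_nz[of "s1 * s2"]) (use s in auto)
    have "lin_comb R ?S \<subseteq> P" using lc_least[OF PM SP] .
    moreover have "nz_frac_ideal R (lin_comb R ?S)" using frac_of[OF nz lc_sub_A[OF sub SR]] .
    ultimately have "st (lin_comb R ?S) \<subseteq> star_f R st P" using star_f_in fin_gen_lc[OF fin] by blast
    then show False using one Pi(4) by blast
  qed
  show ?thesis using that Pi gp by blast
qed

lemma N_mult: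
  assumes f: "f \<in> N_star R Rg st" and g: "g \<in> N_star R Rg st"
  shows "f * g \<in> N_star R Rg st"
proof -
  have fp: "f \<in> poly_over R" "f \<noteq> 0" "st (content_A R Rg f) = st R" using f unfolding N_star_def by auto
  have gp: "g \<in> poly_over R" "g \<noteq> 0" "st (content_A R Rg g) = st R" using g unfolding N_star_def by auto
  have fg: "f * g \<in> poly_over R" "f * g \<noteq> 0" using poly_over_mult[OF sub fp(1) gp(1)] fp gp by auto
  let ?A = "content_A R Rg (f * g)"
  have Anz: "nz_submod R ?A" using CA_nz[OF fg] .
  have Ai: "is_ideal R ?A" "hset ?A" using CA_ideal[OF fg(1)] CA_hset[OF fg(1)] by auto
  have AR: "?A \<subseteq> R" using Ai unfolding is_ideal_def by auto
  have "st ?A = st R"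
  proof (rule ccontr)
    assume ne: "st ?A \<noteq> st R"
    have "1 \<notin> st ?A" using one_st[OF Anz AR] ne by blast
    then have "1 \<notin> star_f R st ?A" using star_f_le_st[OF Anz] by blast
    then obtain P where P: "is_ideal R P" "hset P" "?A \<subseteq> P" "1 \<notin> star_f R st P"
      "\<forall>a b \<alpha> \<beta>. a \<in> Rg \<alpha> \<longrightarrow> b \<in> Rg \<beta> \<longrightarrow> a * b \<in> P \<longrightarrow> a \<in> P \<or> b \<in> P"
      using quasi_max[OF Ai] by blast
    have PM: "is_submod R P" and PR: "P \<subseteq> R" using P unfolding is_ideal_def by auto
    have ex: "\<exists>i. coeff h i \<notin> P" if h: "h \<in> poly_over R" "h \<noteq> 0" "st (content_A R Rg h) = st R" for h
    proof (rule ccontr)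
      assume "\<not> ?thesis"
      then have "content_A R Rg h \<subseteq> P" using CA_sub[OF h(1) P(1,2)] by blast
      then have "st (content_A R Rg h) \<subseteq> star_f R st P"
        using star_f_in frac_of CA_nz[OF h(1,2)] CA_ideal[OF h(1)] CA_fg[OF h(1)]
        unfolding is_ideal_def by blast
      then show False using h(3) one_stR P(4) by auto
    qed
    obtain i where i: "coeff f i \<notin> P" using ex[OF fp] by blast
    obtain j where j: "coeff g j \<notin> P" using ex[OF gp] by blast
    have pr: "a * b \<notin> P" if "a \<in> R" "b \<in> R" "a \<notin> P" "b \<notin> P" for a b
      using hprime_prime[OF P(1,2) P(5)] that by blast
    obtain n where "coeff (f * g) n \<notin> P"
      using poly_prime[OF sub PM PR _ fp(1) gp(1) i j] pr by blast
    then show False using coeff_CA[OF fg(1)] P(3) by blast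
  qed
  then show ?thesis unfolding N_star_def using fg by auto
qed

lemma N_one: "1 \<in> N_star R Rg st"
  unfolding N_star_def using poly_over_1[OF sub] CA_one by auto

lemma N_prod: "finite K \<Longrightarrow> (\<And>k. k \<in> K \<Longrightarrow> q k \<in> N_star R Rg st) \<Longrightarrow> prod q K \<in> N_star R Rg st"
  by (induction K rule: finite_induct) (auto simp: N_one N_mult)

end


context gdom begin

lemma cp_mult_hom_right:
  assumes x: "x \<in> R" and w: "w \<in> Rg \<beta>"
  shows "cp (x * w) (\<epsilon> + \<beta>) = cp x \<epsilon> * w"
proof -
  have wR: "w \<in> R" using w Rg_R by auto
  let ?S = "{\<alpha>. cp x \<alpha> \<noteq> 0}"
  have c: "cp (x * w) (\<epsilon> + \<beta>) = (\<Sum>p\<in>{p\<in>?S \<times> {\<beta>}. fst p + snd p = \<epsilon> + \<beta>}. cp x (fst p) * cp w (snd p))"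
    by (rule cp_mult[OF x wR cp_fin[OF x] order_refl]) (auto simp: cp_hom[OF w])
  show ?thesis
  proof (cases "\<epsilon> \<in> ?S")
    case True
    have e: "{p\<in>?S \<times> {\<beta>}. fst p + snd p = \<epsilon> + \<beta>} = {(\<epsilon>,\<beta>)}" using True by auto
    show ?thesis unfolding c e by (simp add: cp_hom[OF w])
  next
    case False
    have e: "{p\<in>?S \<times> {\<beta>}. fst p + snd p = \<epsilon> + \<beta>} = {}" using False by auto
    show ?thesis unfolding c e using False by simp
  qed
qed

lemma cp_mult_hom_left:
  assumes d: "d \<in> Rg \<gamma>" and m: "m \<in> R"
  shows "\<exists>c\<in>R. cp (d * m) \<theta> = d * c"
proof -
  have dR: "d \<in> R" using d Rg_R by auto
  let ?T = "{\<alpha>. cp m \<alpha> \<noteq> 0}"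
  let ?Q = "{p\<in>{\<gamma>} \<times> ?T. fst p + snd p = \<theta>}"
  have "cp (d * m) \<theta> = (\<Sum>p\<in>?Q. cp d (fst p) * cp m (snd p))"
    by (rule cp_mult[OF dR m _ _ cp_fin[OF m] order_refl]) (auto simp: cp_hom[OF d])
  also have "\<dots> = (\<Sum>p\<in>?Q. d * cp m (snd p))"
    by (rule sum.cong) (auto simp: cp_hom[OF d])
  also have "\<dots> = d * (\<Sum>p\<in>?Q. cp m (snd p))" by (simp add: sum_distrib_left)
  finally show ?thesis using subring_sum[OF sub, of ?Q "\<lambda>p. cp m (snd p)"] cp_R[OF m] by blast
qed

lemma hom_cancel:
  assumes d: "d \<in> Rg \<gamma>" "d \<noteq> 0" and m: "m \<in> R" and dm: "d * m \<in> Rg \<theta>"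
  shows "\<exists>\<eta>. m \<in> Rg \<eta>"
proof (cases "m = 0")
  case True then show ?thesis using Rg_0 by auto
next
  case False
  let ?T = "{\<alpha>. cp m \<alpha> \<noteq> 0}"
  have dmR: "d * m \<in> R" using dm Rg_R by auto
  have key: "\<gamma> + \<eta> = \<theta>" if "\<eta> \<in> ?T" for \<eta>
  proof (rule ccontr)
    assume ne: "\<gamma> + \<eta> \<noteq> \<theta>"
    have "cp (m * d) (\<eta> + \<gamma>) = cp m \<eta> * d" by (rule cp_mult_hom_right[OF m d(1)])
    moreover have "cp (d * m) (\<gamma> + \<eta>) = 0" using cp_hom[OF dm] ne by simp
    ultimately have "cp m \<eta> * d = 0" by (simp add: mult.commute add.commute)
    then show False using that d(2) by simp
  qed
  have "?T \<noteq> {}"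
  proof
    assume "?T = {}"
    then have "m = (\<Sum>\<alpha>\<in>{}. cp m \<alpha>)" using cp_sum_supp[OF m] by simp
    then show False using False by simp
  qed
  then obtain \<eta>0 where e0: "\<eta>0 \<in> ?T" by blast
  have "?T \<subseteq> {\<eta>0}"
  proof
    fix \<eta> assume "\<eta> \<in> ?T"
    then have "\<gamma> + \<eta> = \<gamma> + \<eta>0" using key e0 by simp
    then show "\<eta> \<in> {\<eta>0}" by simp
  qed
  then have "m = (\<Sum>\<alpha>\<in>{\<eta>0}. cp m \<alpha>)" by (rule cp_sum[OF m, rotated]) simp
  then have "m = cp m \<eta>0" by simp
  then show ?thesis using cp_Rg[OF m, of \<eta>0] by metis
qed

lemma hset_IC:
  assumes hI: "hom_ideal R Rg I" and nz: "I \<noteq> {0}"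
  shows "hset (submod_mult R I (colon R I))"
proof -
  let ?C = "colon R I"
  let ?G = "{x * y | x y. x \<in> I \<and> y \<in> ?C}"
  let ?E = "lin_comb R ?G"
  have Ii: "is_ideal R I" using hI unfolding hom_ideal_def by auto
  have IM: "is_submod R I" and IR: "I \<subseteq> R" using Ii unfolding is_ideal_def by auto
  have hs: "hset I" using hom_ideal_hset[OF hI] .
  have GR: "?G \<subseteq> R" unfolding colon_def by (auto simp: mult.commute)
  have Gin: "x * y \<in> ?E" if "x \<in> I" "y \<in> ?C" for x y
  proof -
    have "x * y \<in> ?G" using that by blast
    then show ?thesis by (rule lc_gen[OF sub])
  qed
  obtain x0 where x0: "x0 \<in> I" "x0 \<noteq> 0" using nz IM unfolding is_submod_def by blast
  have x0R: "x0 \<in> R" using x0 IR by auto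
  obtain \<gamma> where g: "cp x0 \<gamma> \<noteq> 0"
  proof (rule ccontr)
    assume "\<not> thesis"
    then have "\<forall>\<gamma>. cp x0 \<gamma> = 0" using that by blast
    then have "x0 = (\<Sum>\<alpha>\<in>{}. cp x0 \<alpha>)" using cp_sum_supp[OF x0R] by simp
    then show False using x0(2) by simp
  qed
  define d where "d = cp x0 \<gamma>"
  have d: "d \<in> I" "d \<in> Rg \<gamma>" "d \<noteq> 0" "d \<in> R"
    using hs x0(1) g cp_Rg[OF x0R] cp_R[OF x0R] unfolding hset_def d_def by auto
  have K1: "cp (u * y) \<delta> \<in> ?E" if u: "u \<in> I" "u \<in> Rg \<alpha>" and y: "y \<in> ?C" for u y \<alpha> \<delta>
  proof -
    have uR: "u \<in> R" using u IR by auto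
    define dy where "dy = d * y"
    have dyR: "dy \<in> R" using y d(1) unfolding dy_def colon_def by (auto simp: mult.commute)
    define z where "z \<epsilon> = cp dy \<epsilon> / d" for \<epsilon>
    have dz: "d * z \<epsilon> = cp dy \<epsilon>" for \<epsilon> unfolding z_def using d(3) by simp
    have zC: "z \<epsilon> \<in> ?C" for \<epsilon>
      unfolding colon_def
    proof (intro CollectI ballI)
      fix v assume v: "v \<in> I"
      have vR: "v \<in> R" using v IR by auto
      have hom: "z \<epsilon> * cp v \<beta> \<in> R" for \<beta>
      proof -
        let ?w = "cp v \<beta>"
        have w: "?w \<in> Rg \<beta>" "?w \<in> I" using cp_Rg[OF vR] hs v unfolding hset_def by auto
        have ywR: "y * ?w \<in> R" using y w(2) unfolding colon_def by auto
        obtain c where c: "c \<in> R" "cp (d * (y * ?w)) (\<epsilon> + \<beta>) = d * c"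
          using cp_mult_hom_left[OF d(2) ywR] by blast
        have "cp (dy * ?w) (\<epsilon> + \<beta>) = cp dy \<epsilon> * ?w" by (rule cp_mult_hom_right[OF dyR w(1)])
        then have "cp dy \<epsilon> * ?w = d * c" using c(2) unfolding dy_def by (simp add: mult.assoc)
        then have "d * (z \<epsilon> * ?w) = d * c" by (simp add: dz mult.assoc[symmetric])
        then have "z \<epsilon> * ?w = c" using d(3) by simp
        then show ?thesis using c(1) by simp
      qed
      have "z \<epsilon> * v = (\<Sum>\<beta>\<in>{\<beta>. cp v \<beta> \<noteq> 0}. z \<epsilon> * cp v \<beta>)"
        using cp_sum_supp[OF vR] by (metis sum_distrib_left)
      also have "\<dots> \<in> R" by (rule subring_sum[OF sub]) (rule hom)
      finally show "z \<epsilon> * v \<in> R" .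
    qed
    have uzR: "u * z \<epsilon> \<in> R" for \<epsilon> using zC[of \<epsilon>] u(1) unfolding colon_def by (auto simp: mult.commute)
    have uzhom: "\<exists>\<eta>. u * z \<epsilon> \<in> Rg \<eta>" for \<epsilon>
    proof (rule hom_cancel[OF d(2) d(3) uzR])
      have "d * (u * z \<epsilon>) = u * cp dy \<epsilon>" using dz by (simp add: ac_simps)
      also have "\<dots> \<in> Rg (\<alpha> + \<epsilon>)" by (rule Rg_mult[OF u(2) cp_Rg[OF dyR]])
      finally show "d * (u * z \<epsilon>) \<in> Rg (\<alpha> + \<epsilon>)" .
    qed
    let ?Sd = "{\<epsilon>. cp dy \<epsilon> \<noteq> 0}"
    have "d * (u * y) = u * dy" unfolding dy_def by (simp add: ac_simps)
    also have "\<dots> = u * (\<Sum>\<epsilon>\<in>?Sd. cp dy \<epsilon>)" using cp_sum_supp[OF dyR] by simp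
    also have "\<dots> = d * (\<Sum>\<epsilon>\<in>?Sd. u * z \<epsilon>)"
      by (simp add: sum_distrib_left dz[symmetric] ac_simps)
    finally have uy: "u * y = (\<Sum>\<epsilon>\<in>?Sd. u * z \<epsilon>)" using d(3) by simp
    have "cp (u * y) \<delta> = (\<Sum>\<epsilon>\<in>?Sd. cp (u * z \<epsilon>) \<delta>)"
      unfolding uy by (rule cp_sumK) (rule uzR)
    also have "\<dots> \<in> ?E"
    proof (rule lc_sum[OF sub])
      fix \<epsilon>
      obtain \<eta> where "u * z \<epsilon> \<in> Rg \<eta>" using uzhom by blast
      then have "cp (u * z \<epsilon>) \<delta> = u * z \<epsilon> \<or> cp (u * z \<epsilon>) \<delta> = 0" using cp_hom by auto
      then show "cp (u * z \<epsilon>) \<delta> \<in> ?E" using Gin[OF u(1) zC] lc_zero by auto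
    qed
    finally show ?thesis .
  qed
  show ?thesis
    unfolding submod_mult_def
  proof (rule hset_lc[OF GR])
    fix s \<delta> assume "s \<in> ?G"
    then obtain x y where s: "s = x * y" "x \<in> I" "y \<in> ?C" by blast
    have xR: "x \<in> R" using s IR by auto
    have yx: "cp x \<beta> * y \<in> R" for \<beta>
      using s(3) hs s(2) unfolding colon_def hset_def by (auto simp: mult.commute)
    have "x * y = (\<Sum>\<beta>\<in>{\<beta>. cp x \<beta> \<noteq> 0}. cp x \<beta> * y)"
      using cp_sum_supp[OF xR] by (metis sum_distrib_right)
    then have "cp s \<delta> = (\<Sum>\<beta>\<in>{\<beta>. cp x \<beta> \<noteq> 0}. cp (cp x \<beta> * y) \<delta>)"
      using s(1) cp_sumK[of "{\<beta>. cp x \<beta> \<noteq> 0}" "\<lambda>\<beta>. cp x \<beta> * y" \<delta>] yx by simp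
    also have "\<dots> \<in> ?E"
    proof (rule lc_sum[OF sub])
      fix \<beta>
      show "cp (cp x \<beta> * y) \<delta> \<in> ?E"
        by (rule K1) (use hs s(2) cp_Rg[OF xR] s(3) in \<open>auto simp: hset_def\<close>)
    qed
    finally show "cp s \<delta> \<in> ?E" .
  qed
qed

end


lemma rep_submod_mult:
  fixes A :: "'a::comm_ring_1 set"
  assumes A: "is_subring A" and C: "is_submod A C" and z: "z \<in> submod_mult A (lin_comb A G) C"
  shows "\<exists>L. set L \<subseteq> G \<times> C \<and> z = sum_list (map (\<lambda>(g,c). g * c) L)"
proof -
  let ?Rep = "{z. \<exists>L. set L \<subseteq> G \<times> C \<and> z = sum_list (map (\<lambda>(g,c). g * c) L)}"
  have "is_submod A ?Rep"
    unfolding is_submod_def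
  proof (intro conjI ballI)
    show "0 \<in> ?Rep" by (auto intro!: exI[of _ "[]"])
  next
    fix x y assume "x \<in> ?Rep" "y \<in> ?Rep"
    then obtain L1 L2 where "set L1 \<subseteq> G \<times> C" "x = sum_list (map (\<lambda>(g,c). g * c) L1)"
      "set L2 \<subseteq> G \<times> C" "y = sum_list (map (\<lambda>(g,c). g * c) L2)" by blast
    then show "x + y \<in> ?Rep" by (intro CollectI exI[of _ "L1 @ L2"]) auto
  next
    fix r x assume r: "r \<in> A" and "x \<in> ?Rep"
    then obtain L where L: "set L \<subseteq> G \<times> C" "x = sum_list (map (\<lambda>(g,c). g * c) L)" by blast
    let ?L = "map (\<lambda>(g,c). (g, r * c)) L"
    have "set ?L \<subseteq> G \<times> C" using L(1) submod_simps(3)[OF C r] by auto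
    moreover have "r * x = sum_list (map (\<lambda>(g,c). g * c) ?L)"
      unfolding L(2) by (induction L) (auto simp: algebra_simps)
    ultimately show "r * x \<in> ?Rep" by blast
  qed
  moreover have "{x * y | x y. x \<in> lin_comb A G \<and> y \<in> C} \<subseteq> ?Rep"
  proof
    fix w assume "w \<in> {x * y | x y. x \<in> lin_comb A G \<and> y \<in> C}"
    then obtain x y where w: "w = x * y" "x \<in> lin_comb A G" "y \<in> C" by blast
    then obtain T c where T: "finite T" "T \<subseteq> G" "\<forall>t\<in>T. c t \<in> A" "x = (\<Sum>t\<in>T. c t * t)"
      unfolding lin_comb_def by blast
    obtain ts where ts: "set ts = T" "distinct ts" using finite_distinct_list[OF T(1)] by blast
    let ?L = "map (\<lambda>t. (t, c t * y)) ts"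
    have "set ?L \<subseteq> G \<times> C" using T ts submod_simps(3)[OF C _ w(3)] by auto
    moreover have "w = sum_list (map (\<lambda>(g,c). g * c) ?L)"
    proof -
      have "w = (\<Sum>t\<in>T. t * (c t * y))" unfolding w(1) T(4) sum_distrib_right by (rule sum.cong) (simp_all add: ac_simps)
      also have "\<dots> = sum_list (map (\<lambda>t. t * (c t * y)) ts)"
        using sum.distinct_set_conv_list[OF ts(2)] ts(1) by metis
      finally show ?thesis by (simp add: comp_def)
    qed
    ultimately show "w \<in> ?Rep" by blast
  qed
  ultimately have "submod_mult A (lin_comb A G) C \<subseteq> ?Rep"
    unfolding submod_mult_def by (rule lc_least)
  then show ?thesis using z by blast
qed

lemma Fract_add_same: "(q::'a::idom) \<noteq> 0 \<Longrightarrow> Fract p q + Fract p' q = Fract (p + p') q"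
proof -
  assume q: "q \<noteq> 0"
  have "Fract p q + Fract p' q = Fract ((p + p') * q) (q * q)" using q by (simp add: algebra_simps)
  also have "\<dots> = Fract (p + p') q" using q by (simp add: eq_fract)
  finally show ?thesis .
qed

lemma Fract_sum: "(q::'a::idom) \<noteq> 0 \<Longrightarrow> Fract (sum g K) q = (\<Sum>k\<in>K. Fract (g k) q)"
  by (induction K rule: infinite_finite_induct) (auto simp: Fract_add_same[symmetric] fract_collapse)

lemma Fract_sum_list: "(q::'a::idom) \<noteq> 0 \<Longrightarrow> Fract (sum_list (map g L)) q = sum_list (map (\<lambda>k. Fract (g k) q) L)"
  by (induction L) (auto simp: Fract_add_same[symmetric] fract_collapse)

lemma Fract_self: "(q::'a::idom) \<noteq> 0 \<Longrightarrow> Fract q q = 1"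
  by (simp add: eq_fract One_fract_def)

lemma Fract_eq1: "Fract (p::'a::idom) 1 = Fract p' 1 \<longleftrightarrow> p = p'"
  by (simp add: eq_fract)

lemma colon_submod:
  assumes A: "is_subring A" shows "is_submod A (colon A E)"
  unfolding is_submod_def colon_def
proof (intro conjI ballI CollectI)
  show "0 * y \<in> A" for y using subring_simps(2)[OF A] by simp
  show "(x + y) * z \<in> A" if "x \<in> {x. \<forall>y\<in>E. x * y \<in> A}" "y \<in> {x. \<forall>y\<in>E. x * y \<in> A}" "z \<in> E" for x y z
    using that subring_simps(3)[OF A] by (simp add: distrib_right)
  show "(r * x) * z \<in> A" if "r \<in> A" "x \<in> {x. \<forall>y\<in>E. x * y \<in> A}" "z \<in> E" for r x z
    using that subring_simps(4)[OF A] by (simp add: mult.assoc)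
qed

context gss begin

abbreviation "NN \<equiv> N_star R Rg st"
abbreviation "NAs \<equiv> NA R Rg st"

lemma N_nz: "q \<in> NN \<Longrightarrow> q \<noteq> 0" unfolding N_star_def by auto
lemma N_poly: "q \<in> NN \<Longrightarrow> q \<in> poly_over R" unfolding N_star_def by auto

lemma NA_intro: "f \<in> poly_over R \<Longrightarrow> q \<in> NN \<Longrightarrow> Fract f q \<in> NAs"
  unfolding NA_def by blast

lemma NA_elim: "z \<in> NAs \<Longrightarrow> \<exists>f q. f \<in> poly_over R \<and> q \<in> NN \<and> z = Fract f q"
  unfolding NA_def by blast

lemma poly_over_0: "0 \<in> poly_over R" unfolding poly_over_def using Rsimps(2) by simp

lemma poly_over_neg: "f \<in> poly_over R \<Longrightarrow> - f \<in> poly_over R"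
  unfolding poly_over_def using Rsimps(5) by simp

lemma NA_sub: "is_subring NAs"
  unfolding is_subring_def
proof (intro conjI ballI)
  show "1 \<in> NAs" using NA_intro[OF poly_over_1[OF sub] N_one] by (simp add: fract_collapse)
  show "0 \<in> NAs" using NA_intro[OF poly_over_0 N_one] by (simp add: fract_collapse)
next
  fix x y assume x: "x \<in> NAs" and y: "y \<in> NAs"
  obtain f q where f: "f \<in> poly_over R" "q \<in> NN" "x = Fract f q" using NA_elim[OF x] by blast
  obtain g r where g: "g \<in> poly_over R" "r \<in> NN" "y = Fract g r" using NA_elim[OF y] by blast
  have qr: "q * r \<in> NN" using N_mult f g by blast
  have "x + y = Fract (f * r + g * q) (q * r)" using f g N_nz by simp
  moreover have "f * r + g * q \<in> poly_over R"
    using poly_over_add[OF sub] poly_over_mult[OF sub] f g N_poly by blast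
  ultimately show "x + y \<in> NAs" using NA_intro qr by simp
  have "x * y = Fract (f * g) (q * r)" using f g by simp
  moreover have "f * g \<in> poly_over R" using poly_over_mult[OF sub] f g by blast
  ultimately show "x * y \<in> NAs" using NA_intro qr by simp
next
  fix x assume x: "x \<in> NAs"
  obtain f q where f: "f \<in> poly_over R" "q \<in> NN" "x = Fract f q" using NA_elim[OF x] by blast
  then show "- x \<in> NAs" using NA_intro poly_over_neg by simp
qed

lemma const_NA: "a \<in> R \<Longrightarrow> Fract [:a:] 1 \<in> NAs"
  using NA_intro[OF poly_over_const[OF sub] N_one] by simp

end


lemma Fract_monom_list:
  fixes f :: "'k::field poly"
  assumes f: "f \<noteq> 0"
  shows "Fract (monom (sum_list (map (\<lambda>(g,c). g * c) L)) i) f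
       = sum_list (map (\<lambda>(g,c). Fract [:g:] 1 * Fract (monom c i) f) L)"
proof (induction L)
  case Nil then show ?case by (simp add: fract_collapse)
next
  case (Cons gc L)
  obtain g c where gc: "gc = (g,c)" by (cases gc)
  have "Fract (monom (g * c + sum_list (map (\<lambda>(g,c). g * c) L)) i) f
      = Fract (monom (g * c) i) f + Fract (monom (sum_list (map (\<lambda>(g,c). g * c) L)) i) f"
    by (simp add: Fract_add_same[OF f] add_monom)
  moreover have "Fract [:g:] 1 * Fract (monom c i) f = Fract (monom (g * c) i) f"
    by (simp add: smult_monom)
  ultimately show ?case using Cons gc by simp
qed

lemma poly_over_prod: "is_subring R \<Longrightarrow> (\<And>k. k \<in> K \<Longrightarrow> q k \<in> poly_over R) \<Longrightarrow> prod q K \<in> poly_over R"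
proof (induction K rule: infinite_finite_induct)
  case (infinite A) then show ?case using poly_over_1 by simp
next
  case empty then show ?case using poly_over_1 by simp
next
  case (insert x F)
  have 1: "q x \<in> poly_over R" "prod q F \<in> poly_over R" using insert by auto
  show ?case using poly_over_mult[OF insert.prems(1) 1] insert(1,2) by simp
qed

context gss begin

lemma dir1:
  assumes Ii: "is_ideal R I" and nz: "I \<noteq> {0}" and inv: "star_f_invertible R st I"
  shows "invertible_ideal NAs (ext_NA R Rg st I)"
proof -
  let ?C = "colon R I"
  let ?E = "submod_mult R I ?C"
  let ?J = "ext_NA R Rg st I"
  let ?M = "submod_mult NAs ?J (colon NAs ?J)"
  have IM: "is_submod R I" and IR: "I \<subseteq> R" using Ii unfolding is_ideal_def by auto
  have NAsub: "is_subring NAs" by (rule NA_sub)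
  have GR: "{x * y | x y. x \<in> I \<and> y \<in> ?C} \<subseteq> R" unfolding colon_def by (auto simp: mult.commute)
  have ER: "?E \<subseteq> R" unfolding submod_mult_def by (rule lc_sub_A[OF sub GR])
  have "star_f R st ?E = st R" using inv unfolding star_f_invertible_def by auto
  then have "1 \<in> star_f R st ?E" using one_stR by simp
  then obtain F where F: "F \<subseteq> ?E" "nz_frac_ideal R F" "fin_gen R F" "1 \<in> st F"
    unfolding star_f_def by blast
  obtain S where S: "finite S" "F = lin_comb R S" using F(3) unfolding fin_gen_def by blast
  have SF: "S \<subseteq> F" using S(2) lc_gen[OF sub] by blast
  have SR: "S \<subseteq> R" using SF F(1) ER by auto
  have Fnz: "nz_submod R F" using F(2) unfolding nz_frac_ideal_def by auto
  have rep: "\<exists>L. set L \<subseteq> I \<times> ?C \<and> s = sum_list (map (\<lambda>(g,c). g * c) L)" if "s \<in> S" for s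
  proof -
    have "s \<in> submod_mult R (lin_comb R I) ?C" using that SF F(1) lc_of_submod[OF sub IM] by auto
    then show ?thesis using rep_submod_mult[OF sub colon_submod[OF sub]] by blast
  qed
  obtain ss where ss: "set ss = S" "distinct ss" using finite_distinct_list[OF S(1)] by blast
  define n where "n = length ss"
  define f where "f = (\<Sum>i<n. monom (ss ! i) i)"
  have cf: "coeff f k = (if k < n then ss ! k else 0)" for k
    unfolding f_def coeff_sum coeff_monom by (simp add: sum.delta)
  have ssS: "i < n \<Longrightarrow> ss ! i \<in> S" for i using ss(1) n_def by auto
  have fp: "f \<in> poly_over R" unfolding poly_over_def using cf ssS SR Rsimps(2) by auto
  obtain s0 where s0: "s0 \<in> S" "s0 \<noteq> 0"
  proof (rule ccontr)
    assume "\<not> thesis"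
    then have "\<And>s. s \<in> S \<Longrightarrow> s = 0" using that by blast
    then have "F \<subseteq> {0}" using lc_zero_gens S(2) by blast
    then show False using Fnz unfolding nz_submod_def is_submod_def by auto
  qed
  obtain k where k: "k < n" "ss ! k = s0" using s0(1) ss(1) n_def by (metis in_set_conv_nth)
  have fnz: "f \<noteq> 0"
  proof
    assume "f = 0"
    then have "coeff f k = 0" by simp
    then show False using cf k s0 by simp
  qed
  have SCA: "S \<subseteq> content_A R Rg f"
  proof
    fix s assume "s \<in> S"
    then obtain i where "i < n" "ss ! i = s" using ss(1) n_def by (metis in_set_conv_nth)
    then have "s = coeff f i" using cf by simp
    then show "s \<in> content_A R Rg f" using coeff_CA[OF fp] by simp
  qed
  have CAsm: "is_submod R (content_A R Rg f)" using CA_ideal[OF fp] unfolding is_ideal_def by auto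
  have "F \<subseteq> content_A R Rg f" unfolding S(2) by (rule lc_least[OF CAsm SCA])
  then have "st F \<subseteq> st (content_A R Rg f)" by (rule st_mono[OF Fnz CA_nz[OF fp fnz]])
  then have "1 \<in> st (content_A R Rg f)" using F(4) by blast
  then have "st (content_A R Rg f) = st R"
    using one_st[OF CA_nz[OF fp fnz]] CA_ideal[OF fp] unfolding is_ideal_def by blast
  then have fN: "f \<in> NN" unfolding N_star_def using fp fnz by auto
  have Gs_NA: "(\<lambda>a. Fract [:a:] 1) ` I \<subseteq> NAs" using const_NA IR by auto
  have JNA: "?J \<subseteq> NAs" unfolding ext_NA_def by (rule lc_sub_A[OF NAsub Gs_NA])
  have Jgen: "Fract [:a:] 1 \<in> ?J" if "a \<in> I" for a
    unfolding ext_NA_def by (rule lc_gen[OF NAsub]) (use that in blast)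
  obtain a0 where a0: "a0 \<in> I" "a0 \<noteq> 0" using nz IM unfolding is_submod_def by blast
  have "Fract [:a0:] 1 \<noteq> 0" using a0(2) by (simp add: Zero_fract_def eq_fract)
  then have Jnz: "nz_submod NAs ?J" unfolding nz_submod_def ext_NA_def
    using lc_submod[OF NAsub] Jgen[OF a0(1)] unfolding ext_NA_def by auto
  have frac: "nz_frac_ideal NAs ?J"
    unfolding nz_frac_ideal_def using Jnz JNA subring_simps(1)[OF NAsub] by (auto intro!: bexI[of _ 1])
  have colon_elem: "Fract (monom c i) f \<in> colon NAs ?J" if c: "c \<in> ?C" for c i
  proof -
    let ?w = "Fract (monom c i) f"
    have "is_submod NAs {z. ?w * z \<in> NAs}"
      unfolding is_submod_def
    proof (intro conjI ballI)
      show "0 \<in> {z. ?w * z \<in> NAs}" using subring_simps(2)[OF NAsub] by simp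
      show "x + y \<in> {z. ?w * z \<in> NAs}" if "x \<in> {z. ?w * z \<in> NAs}" "y \<in> {z. ?w * z \<in> NAs}" for x y
        using that subring_simps(3)[OF NAsub] by (simp add: distrib_left)
      show "r * x \<in> {z. ?w * z \<in> NAs}" if "r \<in> NAs" "x \<in> {z. ?w * z \<in> NAs}" for r x
        using that subring_simps(4)[OF NAsub, of r "?w * x"] by (simp add: mult.left_commute)
    qed
    moreover have "(\<lambda>a. Fract [:a:] 1) ` I \<subseteq> {z. ?w * z \<in> NAs}"
    proof
      fix z assume "z \<in> (\<lambda>a. Fract [:a:] 1) ` I"
      then obtain u where u: "u \<in> I" "z = Fract [:u:] 1" by blast
      have cu: "c * u \<in> R" using c u(1) unfolding colon_def by auto
      have "?w * z = Fract (monom (c * u) i) f" using u(2) by (simp add: smult_monom mult.commute)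
      then show "z \<in> {z. ?w * z \<in> NAs}" using NA_intro[OF poly_over_monom[OF sub cu] fN] by simp
    qed
    ultimately have "?J \<subseteq> {z. ?w * z \<in> NAs}" unfolding ext_NA_def by (rule lc_least)
    then show ?thesis unfolding colon_def by auto
  qed
  have Mgen: "x * y \<in> ?M" if "x \<in> ?J" "y \<in> colon NAs ?J" for x y
    unfolding submod_mult_def by (rule lc_gen[OF NAsub]) (use that in blast)
  have Tin: "Fract (monom (ss ! i) i) f \<in> ?M" if i: "i < n" for i
  proof -
    obtain L where L: "set L \<subseteq> I \<times> ?C" "ss ! i = sum_list (map (\<lambda>(g,c). g * c) L)"
      using rep[OF ssS[OF i]] by blast
    have "Fract (monom (ss ! i) i) f = sum_list (map (\<lambda>(g,c). Fract [:g:] 1 * Fract (monom c i) f) L)"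
      unfolding L(2) by (rule Fract_monom_list[OF fnz])
    also have "\<dots> \<in> ?M"
      unfolding submod_mult_def
    proof (rule submod_sum_list[OF lc_submod[OF NAsub]])
      fix gc assume "gc \<in> set L"
      then obtain g c where gc: "gc = (g,c)" "g \<in> I" "c \<in> ?C" using L(1) by (cases gc) auto
      show "(\<lambda>(g,c). Fract [:g:] 1 * Fract (monom c i) f) gc \<in> lin_comb NAs {x * y | x y. x \<in> ?J \<and> y \<in> colon NAs ?J}"
        using Mgen[OF Jgen[OF gc(2)] colon_elem[OF gc(3)]]
        unfolding gc(1) submod_mult_def by simp
    qed
    finally show ?thesis .
  qed
  have "Fract (\<Sum>i<n. monom (ss ! i) i) f = (\<Sum>i<n. Fract (monom (ss ! i) i) f)"
    by (rule Fract_sum[OF fnz])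
  then have "(\<Sum>i<n. Fract (monom (ss ! i) i) f) = Fract f f" by (simp only: f_def[symmetric])
  then have "(1 :: 'k poly fract) = (\<Sum>i<n. Fract (monom (ss ! i) i) f)" using Fract_self[OF fnz] by simp
  also have "\<dots> \<in> ?M" unfolding submod_mult_def
    by (rule lc_sum[OF NAsub]) (use Tin in \<open>simp add: submod_mult_def\<close>)
  finally have oneM: "1 \<in> ?M" .
  have "?M = NAs"
  proof
    show "?M \<subseteq> NAs"
      unfolding submod_mult_def
    proof (rule lc_sub_A[OF NAsub])
      show "{x * y | x y. x \<in> ?J \<and> y \<in> colon NAs ?J} \<subseteq> NAs"
        unfolding colon_def by (auto simp: mult.commute)
    qed
    show "NAs \<subseteq> ?M"
    proof
      fix z assume "z \<in> NAs"
      then have "z * 1 \<in> ?M" using lc_smult[OF NAsub _ oneM[unfolded submod_mult_def]]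
        unfolding submod_mult_def by blast
      then show "z \<in> ?M" by simp
    qed
  qed
  then show ?thesis unfolding invertible_ideal_def using frac by auto
qed

end


context gss begin

lemma dir2:
  assumes hI: "hom_ideal R Rg I" and nz: "I \<noteq> {0}" and fg: "fin_gen R I"
    and inv: "invertible_ideal NAs (ext_NA R Rg st I)"
  shows "star_f_invertible R st I"
proof -
  let ?C = "colon R I"
  let ?G = "{x * y | x y. x \<in> I \<and> y \<in> ?C}"
  let ?E = "submod_mult R I ?C"
  let ?J = "ext_NA R Rg st I"
  let ?CJ = "colon NAs ?J"
  have Ii: "is_ideal R I" using hI unfolding hom_ideal_def by auto
  have IM: "is_submod R I" and IR: "I \<subseteq> R" using Ii unfolding is_ideal_def by auto
  have NAsub: "is_subring NAs" by (rule NA_sub)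
  have GR: "?G \<subseteq> R" unfolding colon_def by (auto simp: mult.commute)
  have ER: "?E \<subseteq> R" unfolding submod_mult_def by (rule lc_sub_A[OF sub GR])
  have Eid: "is_ideal R ?E" unfolding submod_mult_def by (rule lc_ideal[OF GR])
  have Ehs: "hset ?E" by (rule hset_IC[OF hI nz])
  have Egen: "x * y \<in> ?E" if "x \<in> I" "y \<in> ?C" for x y
    unfolding submod_mult_def by (rule lc_gen[OF sub]) (use that in blast)
  have Ifrac: "nz_frac_ideal R I" by (rule frac_of[OF nz_ideal[OF Ii nz] IR])
  obtain Gs where Gs: "finite Gs" "I = lin_comb R Gs" using fg unfolding fin_gen_def by blast
  have GsI: "Gs \<subseteq> I" using Gs(2) lc_gen[OF sub] by blast
  obtain g0 where g0: "g0 \<in> Gs" "g0 \<noteq> 0"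
  proof (rule ccontr)
    assume "\<not> thesis"
    then have "\<And>s. s \<in> Gs \<Longrightarrow> s = 0" using that by blast
    then have "I \<subseteq> {0}" using lc_zero_gens Gs(2) by blast
    then show False using nz IM unfolding is_submod_def by auto
  qed
  have Jgen: "Fract [:a:] 1 \<in> ?J" if "a \<in> I" for a
    unfolding ext_NA_def by (rule lc_gen[OF NAsub]) (use that in blast)
  have "submod_mult NAs ?J ?CJ = NAs" using inv unfolding invertible_ideal_def by auto
  then have "1 \<in> submod_mult NAs (lin_comb NAs ((\<lambda>a. Fract [:a:] 1) ` I)) ?CJ"
    using subring_simps(1)[OF NAsub] unfolding ext_NA_def by simp
  then obtain L where L: "set L \<subseteq> ((\<lambda>a. Fract [:a:] 1) ` I) \<times> ?CJ"
      "1 = sum_list (map (\<lambda>(g,c). g * c) L)"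
    using rep_submod_mult[OF NAsub colon_submod[OF NAsub]] by blast
  define n where "n = length L"
  define w where "w k = snd (L ! k)" for k
  have Lmem: "L ! k \<in> ((\<lambda>a. Fract [:a:] 1) ` I) \<times> ?CJ" if "k < n" for k
    using L(1) nth_mem[of k L] that unfolding n_def by blast
  have Lk: "\<exists>a\<in>I. fst (L ! k) = Fract [:a:] 1" if "k < n" for k
  proof -
    have "fst (L ! k) \<in> (\<lambda>a. Fract [:a:] 1) ` I" using Lmem[OF that] by (simp add: mem_Times_iff)
    then show ?thesis by blast
  qed
  obtain a where a: "\<And>k. k < n \<Longrightarrow> a k \<in> I \<and> fst (L ! k) = Fract [:a k:] 1"
    using Lk by metis
  have wC: "w k \<in> ?CJ" if "k < n" for k
    using Lmem[OF that] unfolding w_def by (simp add: mem_Times_iff)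
  define K where "K = {..<n} \<times> Gs"
  have finK: "finite K" unfolding K_def using Gs(1) by simp
  have ex: "\<exists>pq. fst pq \<in> poly_over R \<and> snd pq \<in> NN \<and> w (fst kb) * Fract [:snd kb:] 1 = Fract (fst pq) (snd pq)"
    if "kb \<in> K" for kb
  proof -
    have k: "fst kb < n" and b: "snd kb \<in> I" using that GsI unfolding K_def by auto
    have wk: "w (fst kb) \<in> ?CJ" by (rule wC[OF k])
    have jb: "Fract [:snd kb:] 1 \<in> ?J" by (rule Jgen[OF b])
    have "w (fst kb) * Fract [:snd kb:] 1 \<in> NAs" using wk jb unfolding colon_def by blast
    then obtain f q where fq: "f \<in> poly_over R" "q \<in> NN" "w (fst kb) * Fract [:snd kb:] 1 = Fract f q"
      using NA_elim by blast
    have "fst (f,q) \<in> poly_over R \<and> snd (f,q) \<in> NN \<and> w (fst kb) * Fract [:snd kb:] 1 = Fract (fst (f,q)) (snd (f,q))"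
      unfolding fst_conv snd_conv using fq by blast
    then show ?thesis by (rule exI)
  qed
  have ex': "\<forall>kb\<in>K. \<exists>pq. fst pq \<in> poly_over R \<and> snd pq \<in> NN \<and> w (fst kb) * Fract [:snd kb:] 1 = Fract (fst pq) (snd pq)"
    using ex by (rule ballI)
  from bchoice[OF ex'] obtain PQ where PQ0: "\<forall>kb\<in>K. fst (PQ kb) \<in> poly_over R \<and> snd (PQ kb) \<in> NN
      \<and> w (fst kb) * Fract [:snd kb:] 1 = Fract (fst (PQ kb)) (snd (PQ kb))"
    by (elim exE)
  have PQ: "fst (PQ kb) \<in> poly_over R \<and> snd (PQ kb) \<in> NN
      \<and> w (fst kb) * Fract [:snd kb:] 1 = Fract (fst (PQ kb)) (snd (PQ kb))" if "kb \<in> K" for kb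
    using PQ0 that by (rule bspec)
  define P where "P kb = fst (PQ kb)" for kb
  define Q where "Q kb = snd (PQ kb)" for kb
  define s where "s = prod Q K"
  have QN: "Q kb \<in> NN" if "kb \<in> K" for kb using PQ[OF that] unfolding Q_def by blast
  have PP: "P kb \<in> poly_over R" if "kb \<in> K" for kb using PQ[OF that] unfolding P_def by blast
  have PQe: "w (fst kb) * Fract [:snd kb:] 1 = Fract (P kb) (Q kb)" if "kb \<in> K" for kb
    using PQ[OF that] unfolding P_def Q_def by blast
  have sN: "s \<in> NN" unfolding s_def by (rule N_prod[OF finK QN])
  have snz: "s \<noteq> 0" using N_nz[OF sN] .
  define rr where "rr kb = prod Q (K - {kb}) * P kb" for kb
  have rr_poly: "rr kb \<in> poly_over R" if "kb \<in> K" for kb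
    unfolding rr_def
  proof (rule poly_over_mult[OF sub])
    show "prod Q (K - {kb}) \<in> poly_over R" by (rule poly_over_prod[OF sub]) (use N_poly QN in blast)
    show "P kb \<in> poly_over R" by (rule PP[OF that])
  qed
  have clearA: "Fract s 1 * (w (fst kb) * Fract [:snd kb:] 1) = Fract (rr kb) 1" if kb: "kb \<in> K" for kb
  proof -
    have Qnz: "Q kb \<noteq> 0" using N_nz[OF QN[OF kb]] .
    have sQ: "s = Q kb * prod Q (K - {kb})" unfolding s_def using prod.remove[OF finK kb] .
    have "Fract s 1 * (w (fst kb) * Fract [:snd kb:] 1) = Fract s 1 * Fract (P kb) (Q kb)"
      using PQe[OF kb] by simp
    also have "\<dots> = Fract (Q kb * rr kb) (Q kb * 1)" unfolding rr_def sQ by (simp add: ac_simps)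
    also have "\<dots> = Fract (rr kb) 1" by (rule mult_fract_cancel[OF Qnz])
    finally show ?thesis .
  qed
  define h where "h k = smult (inverse g0) (rr (k, g0))" for k
  have g0inv: "Fract [:g0:] 1 * Fract 1 [:g0:] = (1 :: 'k poly fract)"
    using g0(2) by (simp add: Fract_self)
  have clearB: "Fract s 1 * w k = Fract (h k) 1" if k: "k < n" for k
  proof -
    have kb: "(k, g0) \<in> K" using k g0(1) unfolding K_def by auto
    have "Fract s 1 * w k = Fract s 1 * w k * (Fract [:g0:] 1 * Fract 1 [:g0:])"
      unfolding g0inv by simp
    also have "\<dots> = (Fract s 1 * (w k * Fract [:g0:] 1)) * Fract 1 [:g0:]"
      by (simp only: mult.assoc)
    also have "\<dots> = Fract (rr (k, g0)) 1 * Fract 1 [:g0:]" using clearA[OF kb] by simp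
    also have "\<dots> = Fract (rr (k, g0)) [:g0:]" by simp
    also have "\<dots> = Fract (h k) 1" using g0(2) by (simp add: eq_fract h_def)
    finally show ?thesis .
  qed
  have clearC: "smult b (h k) = rr (k, b)" if k: "k < n" and b: "b \<in> Gs" for k b
  proof -
    have kb: "(k, b) \<in> K" using k b unfolding K_def by auto
    have "Fract (smult b (h k)) 1 = Fract [:b:] 1 * Fract (h k) 1" by simp
    also have "\<dots> = Fract [:b:] 1 * (Fract s 1 * w k)" by (simp only: clearB[OF k])
    also have "\<dots> = Fract s 1 * (w k * Fract [:b:] 1)" by (simp only: mult_ac)
    also have "\<dots> = Fract (rr (k, b)) 1" using clearA[OF kb] by simp
    finally show ?thesis by (simp add: Fract_eq1)
  qed
  have hC: "coeff (h k) i \<in> ?C" if k: "k < n" for k i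
  proof -
    let ?c = "coeff (h k) i"
    have "is_submod R {v. ?c * v \<in> R}"
      unfolding is_submod_def
    proof (intro conjI ballI)
      show "0 \<in> {v. ?c * v \<in> R}" using Rsimps(2) by simp
      show "x + y \<in> {v. ?c * v \<in> R}" if "x \<in> {v. ?c * v \<in> R}" "y \<in> {v. ?c * v \<in> R}" for x y
        using that Rsimps(3) by (simp add: distrib_left)
      show "r * x \<in> {v. ?c * v \<in> R}" if "r \<in> R" "x \<in> {v. ?c * v \<in> R}" for r x
        using that Rsimps(4)[of r "?c * x"] by (simp add: mult.left_commute)
    qed
    moreover have "Gs \<subseteq> {v. ?c * v \<in> R}"
    proof
      fix b assume b: "b \<in> Gs"
      have "coeff (smult b (h k)) i = coeff (rr (k, b)) i" using clearC[OF k b] by simp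
      then have "?c * b = coeff (rr (k, b)) i" by (simp add: mult.commute)
      moreover have "(k, b) \<in> K" using k b unfolding K_def by auto
      ultimately show "b \<in> {v. ?c * v \<in> R}" using poly_over_coeff[OF rr_poly] by simp
    qed
    ultimately have "I \<subseteq> {v. ?c * v \<in> R}" unfolding Gs(2) by (rule lc_least)
    then show ?thesis unfolding colon_def by auto
  qed
  have "Fract s 1 = Fract s 1 * sum_list (map (\<lambda>(g,c). g * c) L)" using L(2) by simp
  also have "\<dots> = (\<Sum>k = 0..<n. Fract s 1 * (fst (L ! k) * snd (L ! k)))"
    unfolding sum_list_sum_nth n_def by (simp add: sum_distrib_left case_prod_beta)
  also have "\<dots> = (\<Sum>k = 0..<n. Fract (smult (a k) (h k)) 1)"
  proof (rule sum.cong)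
    fix k assume "k \<in> {0..<n}"
    then have k: "k < n" by simp
    have "Fract s 1 * (fst (L ! k) * snd (L ! k)) = Fract [:a k:] 1 * (Fract s 1 * w k)"
      using a[OF k] unfolding w_def by (simp add: ac_simps)
    also have "\<dots> = Fract (smult (a k) (h k)) 1" using clearB[OF k] by simp
    finally show "Fract s 1 * (fst (L ! k) * snd (L ! k)) = Fract (smult (a k) (h k)) 1" .
  qed simp
  also have "\<dots> = Fract (\<Sum>k = 0..<n. smult (a k) (h k)) 1" by (rule Fract_sum[symmetric]) simp
  finally have sE: "s = (\<Sum>k = 0..<n. smult (a k) (h k))" by (simp add: Fract_eq1)
  have coeffE: "coeff s i \<in> ?E" for i
  proof -
    have "coeff s i = (\<Sum>k = 0..<n. a k * coeff (h k) i)" unfolding sE by (simp add: coeff_sum)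
    also have "\<dots> \<in> ?E"
      unfolding submod_mult_def
    proof (rule lc_sum[OF sub])
      fix k assume "k \<in> {0..<n}"
      then have k: "k < n" by simp
      show "a k * coeff (h k) i \<in> lin_comb R ?G"
        using Egen[OF conjunct1[OF a[OF k]] hC[OF k]] unfolding submod_mult_def .
    qed
    finally show ?thesis .
  qed
  have sp: "s \<in> poly_over R" and sst: "st (content_A R Rg s) = st R" using sN unfolding N_star_def by auto
  have "content_A R Rg s \<subseteq> ?E" by (rule CA_sub[OF sp Eid Ehs coeffE])
  then have "st (content_A R Rg s) \<subseteq> star_f R st ?E"
    using star_f_in frac_of[OF CA_nz[OF sp snz]] CA_ideal[OF sp] CA_fg[OF sp]
    unfolding is_ideal_def by blast
  then have "st R \<subseteq> star_f R st ?E" using sst by simp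
  moreover have "star_f R st ?E \<subseteq> st R" by (rule star_f_sub[OF ER])
  ultimately show ?thesis unfolding star_f_invertible_def using Ifrac by auto
qed

end

theorem lemma2p5:
  fixes R :: "'k::field set" and Rg :: "'g::cancel_comm_monoid_add \<Rightarrow> 'k set"
    and st :: "'k set \<Rightarrow> 'k set" and I :: "'k set"
  assumes "graded_domain R Rg"
    and "semistar R st"
    and "st R \<subset> hom_quot_field R Rg"
    and "hom_ideal R Rg I" and "I \<noteq> {0}" and "fin_gen R I"
  shows "star_f_invertible R st I \<longleftrightarrow> invertible_ideal (NA R Rg st) (ext_NA R Rg st I)"
proof -
  interpret gss R Rg st
    by (rule gss.intro[OF gdom.intro[OF assms(1)] gss_axioms.intro[OF assms(2)]])
  have Ii: "is_ideal R I" using assms(4) unfolding hom_ideal_def by auto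
  show ?thesis using dir1[OF Ii assms(5)] dir2[OF assms(4,5,6)] by blast
qed


end
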